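(* Let $H\ge1$, $d_0=d_x$, $d_{H+1}=d_y$, and widths $d_1,\dots,d_H$ with $d_j\ge\min\{d_x,d_y\}$ for all $j$. For $W_j\in\mathbb{R}^{d_j\times d_{j-1}}$, $j\in[H+1]$, write $W_{i:j}=W_iW_{i-1}\cdots W_j$ for $i\ge j$ and $W_{j-1:j}=I$. Let $\ell_0:\mathbb{R}^{d_y\times d_x}\to\mathbb{R}$ be differentiable and define $\ell((W_j)_{j=1}^{H+1})=\ell_0(W_{H+1:1})$. Let $(\hat W_j)_{j=1}^{H+1}$ be any critical point of $\ell$. Then: 1. If $\nabla\ell_0(\hat W_{H+1:1})\ne0$, then $(\hat W_j)_{j=1}^{H+1}$ is a saddle point of $\ell$. 2. If $\nabla\ell_0(\hat W_{H+1:1})=0$, then (a) $(\hat W_j)_{j=1}^{H+1}$ is a local minimum (resp. maximum) of $\ell$ if $\hat W_{H+1:1}$ is a local minimum (resp. maximum) of $\ell_0$; and (b) $(\hat W_j)_{j=1}^{H+1}$ is a global minimum (resp. maximum) of $\ell$ if and only if $\hat W_{H+1:1}$ is a global minimum (resp. maximum) of $\ell_0$. 3. If there exists $j^*\in[H+1]$ such that $\hat W_{H+1:j^*+1}$ has full row rank and $\hat W_{j^*-1:1}$ has full column rank, then $\nabla\ell_0(\hat W_{H+1:1})=0$ (so 2(a) and 2(b) hold), and moreover (a) $\hat W_{H+1:1}$ is a local minimum (resp. maximum) of $\ell_0$ if $(\hat W_j)_{j=1}^{H+1}$ is a local minimum (resp. maximum) of $\ell$.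
   Context: $[a]=\{1,\dots,a\}$. A critical point of $\ell$ is a point where all partial derivatives $\partial\ell/\partial W_j$ vanish. A saddle point is a critical point that is neither a local minimum nor a local maximum. *)

theory Defs
  imports Complex_Main
begin

text \<open>Real matrices with explicit dimensions: an m x n matrix is a function
  nat => nat => real that vanishes outside the index box {0..<m} x {0..<n}
  (0-based indices). This is needed because the widths d_j vary with j and H
  is arbitrary, so dimensions cannot be types.\<close>

type_synonym mat = "nat \<Rightarrow> nat \<Rightarrow> real"

definition mats :: "nat \<Rightarrow> nat \<Rightarrow> mat set" where
  "mats m n = {A. \<forall>i j. (m \<le> i \<or> n \<le> j) \<longrightarrow> A i j = 0}"

definition zmat :: mat where "zmat = (\<lambda>i j. 0)"

definition ident :: "nat \<Rightarrow> mat" where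
  "ident n = (\<lambda>i j. if i = j \<and> i < n then 1 else 0)"

definition madd :: "mat \<Rightarrow> mat \<Rightarrow> mat" where
  "madd A B = (\<lambda>i j. A i j + B i j)"

definition msub :: "mat \<Rightarrow> mat \<Rightarrow> mat" where
  "msub A B = (\<lambda>i j. A i j - B i j)"

definition mmul :: "nat \<Rightarrow> mat \<Rightarrow> mat \<Rightarrow> mat" where
  "mmul p A B = (\<lambda>i j. \<Sum>k<p. A i k * B k j)"

definition frob_inner :: "nat \<Rightarrow> nat \<Rightarrow> mat \<Rightarrow> mat \<Rightarrow> real" where
  "frob_inner m n A B = (\<Sum>i<m. \<Sum>j<n. A i j * B i j)"

definition frob_norm :: "nat \<Rightarrow> nat \<Rightarrow> mat \<Rightarrow> real" where
  "frob_norm m n A = sqrt (frob_inner m n A A)"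

definition mat_has_grad :: "nat \<Rightarrow> nat \<Rightarrow> (mat \<Rightarrow> real) \<Rightarrow> mat \<Rightarrow> mat \<Rightarrow> bool" where
  "mat_has_grad m n f G M \<longleftrightarrow> G \<in> mats m n \<and>
     (\<forall>e>0. \<exists>\<delta>>0. \<forall>E\<in>mats m n. frob_norm m n E < \<delta> \<longrightarrow>
        \<bar>f (madd M E) - f M - frob_inner m n G E\<bar> \<le> e * frob_norm m n E)"

definition mat_differentiable :: "nat \<Rightarrow> nat \<Rightarrow> (mat \<Rightarrow> real) \<Rightarrow> bool" where
  "mat_differentiable m n f \<longleftrightarrow> (\<forall>M\<in>mats m n. \<exists>G. mat_has_grad m n f G M)"

definition mat_grad :: "nat \<Rightarrow> nat \<Rightarrow> (mat \<Rightarrow> real) \<Rightarrow> mat \<Rightarrow> mat" where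
  "mat_grad m n f M = (SOME G. mat_has_grad m n f G M)"

definition mat_local_min :: "nat \<Rightarrow> nat \<Rightarrow> (mat \<Rightarrow> real) \<Rightarrow> mat \<Rightarrow> bool" where
  "mat_local_min m n f M \<longleftrightarrow> (\<exists>\<epsilon>>0. \<forall>X\<in>mats m n. frob_norm m n (msub X M) < \<epsilon> \<longrightarrow> f M \<le> f X)"

definition mat_local_max :: "nat \<Rightarrow> nat \<Rightarrow> (mat \<Rightarrow> real) \<Rightarrow> mat \<Rightarrow> bool" where
  "mat_local_max m n f M \<longleftrightarrow> (\<exists>\<epsilon>>0. \<forall>X\<in>mats m n. frob_norm m n (msub X M) < \<epsilon> \<longrightarrow> f X \<le> f M)"

definition mat_global_min :: "nat \<Rightarrow> nat \<Rightarrow> (mat \<Rightarrow> real) \<Rightarrow> mat \<Rightarrow> bool" where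
  "mat_global_min m n f M \<longleftrightarrow> (\<forall>X\<in>mats m n. f M \<le> f X)"

definition mat_global_max :: "nat \<Rightarrow> nat \<Rightarrow> (mat \<Rightarrow> real) \<Rightarrow> mat \<Rightarrow> bool" where
  "mat_global_max m n f M \<longleftrightarrow> (\<forall>X\<in>mats m n. f X \<le> f M)"

definition full_row_rank :: "nat \<Rightarrow> nat \<Rightarrow> mat \<Rightarrow> bool" where
  "full_row_rank m n A \<longleftrightarrow>
     (\<forall>c::nat \<Rightarrow> real. (\<forall>j<n. (\<Sum>i<m. c i * A i j) = 0) \<longrightarrow> (\<forall>i<m. c i = 0))"

definition full_col_rank :: "nat \<Rightarrow> nat \<Rightarrow> mat \<Rightarrow> bool" where
  "full_col_rank m n A \<longleftrightarrow>
     (\<forall>c::nat \<Rightarrow> real. (\<forall>i<m. (\<Sum>j<n. A i j * c j) = 0) \<longrightarrow> (\<forall>j<n. c j = 0))"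

definition params :: "(nat \<Rightarrow> nat) \<Rightarrow> nat \<Rightarrow> (nat \<Rightarrow> mat) set" where
  "params d H = {W. (\<forall>j\<in>{1..H+1}. W j \<in> mats (d j) (d (j - 1))) \<and>
                    (\<forall>j. j \<notin> {1..H+1} \<longrightarrow> W j = zmat)}"

definition pnorm :: "(nat \<Rightarrow> nat) \<Rightarrow> nat \<Rightarrow> (nat \<Rightarrow> mat) \<Rightarrow> (nat \<Rightarrow> mat) \<Rightarrow> real" where
  "pnorm d H V W = sqrt (\<Sum>j\<in>{1..H+1}. (frob_norm (d j) (d (j - 1)) (msub (V j) (W j))) ^ 2)"

text \<open>seg d W j k = W_{j+k-1} ... W_j, i.e. W_{i:j} = seg d W j (i+1-j);
  in particular seg d W j 0 = W_{j-1:j} = I (of size d_{j-1}).\<close>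
fun seg :: "(nat \<Rightarrow> nat) \<Rightarrow> (nat \<Rightarrow> mat) \<Rightarrow> nat \<Rightarrow> nat \<Rightarrow> mat" where
  "seg d W j 0 = ident (d (j - 1))"
| "seg d W j (Suc k) = mmul (d (j + k - 1)) (W (j + k)) (seg d W j k)"

definition p_local_min :: "(nat \<Rightarrow> nat) \<Rightarrow> nat \<Rightarrow> ((nat \<Rightarrow> mat) \<Rightarrow> real) \<Rightarrow> (nat \<Rightarrow> mat) \<Rightarrow> bool" where
  "p_local_min d H L W \<longleftrightarrow> (\<exists>\<epsilon>>0. \<forall>V\<in>params d H. pnorm d H V W < \<epsilon> \<longrightarrow> L W \<le> L V)"

definition p_local_max :: "(nat \<Rightarrow> nat) \<Rightarrow> nat \<Rightarrow> ((nat \<Rightarrow> mat) \<Rightarrow> real) \<Rightarrow> (nat \<Rightarrow> mat) \<Rightarrow> bool" where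
  "p_local_max d H L W \<longleftrightarrow> (\<exists>\<epsilon>>0. \<forall>V\<in>params d H. pnorm d H V W < \<epsilon> \<longrightarrow> L V \<le> L W)"

definition p_global_min :: "(nat \<Rightarrow> nat) \<Rightarrow> nat \<Rightarrow> ((nat \<Rightarrow> mat) \<Rightarrow> real) \<Rightarrow> (nat \<Rightarrow> mat) \<Rightarrow> bool" where
  "p_global_min d H L W \<longleftrightarrow> (\<forall>V\<in>params d H. L W \<le> L V)"

definition p_global_max :: "(nat \<Rightarrow> nat) \<Rightarrow> nat \<Rightarrow> ((nat \<Rightarrow> mat) \<Rightarrow> real) \<Rightarrow> (nat \<Rightarrow> mat) \<Rightarrow> bool" where
  "p_global_max d H L W \<longleftrightarrow> (\<forall>V\<in>params d H. L V \<le> L W)"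

definition p_critical :: "(nat \<Rightarrow> nat) \<Rightarrow> nat \<Rightarrow> ((nat \<Rightarrow> mat) \<Rightarrow> real) \<Rightarrow> (nat \<Rightarrow> mat) \<Rightarrow> bool" where
  "p_critical d H L W \<longleftrightarrow>
     (\<forall>j\<in>{1..H+1}. mat_has_grad (d j) (d (j - 1)) (\<lambda>X. L (W(j := X))) zmat (W j))"

definition p_saddle :: "(nat \<Rightarrow> nat) \<Rightarrow> nat \<Rightarrow> ((nat \<Rightarrow> mat) \<Rightarrow> real) \<Rightarrow> (nat \<Rightarrow> mat) \<Rightarrow> bool" where
  "p_saddle d H L W \<longleftrightarrow> p_critical d H L W \<and> \<not> p_local_min d H L W \<and> \<not> p_local_max d H L W"

end

theory Submission
  imports Defs "HOL-Analysis.L2_Norm"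
begin

lemma mats_iff: "A \<in> mats m n \<longleftrightarrow> (\<forall>i j. (m \<le> i \<or> n \<le> j) \<longrightarrow> A i j = 0)"
  by (simp add: mats_def)

lemma matsD: "A \<in> mats m n \<Longrightarrow> m \<le> i \<or> n \<le> j \<Longrightarrow> A i j = 0"
  by (auto simp: mats_def)

lemma zmat_mats[simp]: "zmat \<in> mats m n"
  by (simp add: mats_def zmat_def)

lemma ident_mats: "c \<le> m \<Longrightarrow> c \<le> n \<Longrightarrow> ident c \<in> mats m n"
  by (auto simp: mats_def ident_def)

lemma mmul_assoc: "mmul p (mmul q A B) C = mmul q A (mmul p B C)"
proof (intro ext)
  fix i j
  have "mmul p (mmul q A B) C i j = (\<Sum>k<p. \<Sum>l<q. A i l * B l k * C k j)"
    by (simp add: mmul_def sum_distrib_right)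
  also have "\<dots> = (\<Sum>l<q. \<Sum>k<p. A i l * B l k * C k j)"
    by (rule sum.swap)
  also have "\<dots> = mmul q A (mmul p B C) i j"
    by (simp add: mmul_def sum_distrib_left mult.assoc)
  finally show "mmul p (mmul q A B) C i j = mmul q A (mmul p B C) i j" .
qed

lemma mmul_mats: "A \<in> mats m q \<Longrightarrow> B \<in> mats r n \<Longrightarrow> mmul p A B \<in> mats m n"
  by (auto simp: mats_def mmul_def)

lemma mmul_ident_left: "c \<le> p \<Longrightarrow> B \<in> mats c k \<Longrightarrow> mmul p (ident c) B = B"
proof (intro ext)
  fix i j assume cp: "c \<le> p" and B: "B \<in> mats c k"
  have "mmul p (ident c) B i j = (\<Sum>l<p. if l = i then (if i < c then B l j else 0) else 0)"
    unfolding mmul_def ident_def by (rule sum.cong) auto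
  also have "\<dots> = (if i < c then B i j else 0)"
    using cp by (auto simp: sum.delta)
  also have "\<dots> = B i j" using B by (auto simp: mats_def)
  finally show "mmul p (ident c) B i j = B i j" .
qed

lemma mmul_ident_right: "c \<le> p \<Longrightarrow> A \<in> mats k c \<Longrightarrow> mmul p A (ident c) = A"
proof (intro ext)
  fix i j assume cp: "c \<le> p" and A: "A \<in> mats k c"
  have "mmul p A (ident c) i j = (\<Sum>l<p. if l = j then (if j < c then A i l else 0) else 0)"
    unfolding mmul_def ident_def by (rule sum.cong) auto
  also have "\<dots> = (if j < c then A i j else 0)"
    using cp by (auto simp: sum.delta)
  also have "\<dots> = A i j" using A by (auto simp: mats_def)
  finally show "mmul p A (ident c) i j = A i j" .
qed

definition lay :: "(nat \<Rightarrow> nat) \<Rightarrow> (nat \<Rightarrow> mat) \<Rightarrow> bool" where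
  "lay d W \<longleftrightarrow> (\<forall>i. W i \<in> mats (d i) (d (i - 1)))"

lemma params_lay: "W \<in> params d H \<Longrightarrow> lay d W"
  unfolding lay_def
proof (intro allI)
  fix i assume W: "W \<in> params d H"
  show "W i \<in> mats (d i) (d (i - 1))"
  proof (cases "i \<in> {1..H+1}")
    case True then show ?thesis using W by (simp add: params_def)
  next
    case False then have "W i = zmat" using W by (simp add: params_def)
    then show ?thesis by simp
  qed
qed

lemma lay_upd: "lay d W \<Longrightarrow> X \<in> mats (d k) (d (k - 1)) \<Longrightarrow> lay d (W(k := X))"
  by (auto simp: lay_def)

lemma params_upd: "W \<in> params d H \<Longrightarrow> k \<in> {1..H+1} \<Longrightarrow> X \<in> mats (d k) (d (k - 1))
  \<Longrightarrow> W(k := X) \<in> params d H"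
  by (auto simp: params_def)

lemma seg_mats: "lay d W \<Longrightarrow> 1 \<le> j \<Longrightarrow> seg d W j a \<in> mats (d (j + a - 1)) (d (j - 1))"
proof (induction a)
  case 0
  then show ?case by (simp add: ident_mats)
next
  case (Suc a)
  have "W (j + a) \<in> mats (d (j + a)) (d (j + a - 1))" using Suc.prems by (simp add: lay_def)
  then show ?case using Suc by (auto intro: mmul_mats)
qed

lemma seg_cong: "(\<And>i. j \<le> i \<Longrightarrow> i < j + a \<Longrightarrow> W i = V i) \<Longrightarrow> seg d W j a = seg d V j a"
  by (induction a) auto

lemma seg_split: "lay d W \<Longrightarrow> 1 \<le> j \<Longrightarrow>
  seg d W j (a + b) = mmul (d (j + a - 1)) (seg d W (j + a) b) (seg d W j a)"
proof (induction b)
  case 0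
  then show ?case using seg_mats[OF 0(1,2), of a] by (simp add: mmul_ident_left)
next
  case (Suc b)
  have "seg d W j (a + Suc b) = mmul (d (j + (a + b) - 1)) (W (j + (a + b))) (seg d W j (a + b))"
    by simp
  also have "\<dots> = mmul (d (j + a - 1)) (mmul (d (j + a + b - 1)) (W (j + a + b)) (seg d W (j + a) b)) (seg d W j a)"
    using Suc by (simp add: mmul_assoc add.assoc)
  also have "\<dots> = mmul (d (j + a - 1)) (seg d W (j + a) (Suc b)) (seg d W j a)"
    by simp
  finally show ?case .
qed

lemma seg_one: "lay d W \<Longrightarrow> seg d W j 1 = W j"
proof -
  assume "lay d W"
  then have "W j \<in> mats (d j) (d (j - 1))" by (simp add: lay_def)
  then show ?thesis by (simp add: mmul_ident_right)
qed

lemma layer_split: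
  assumes "lay d W" "1 \<le> k" "k \<le> H + 1"
  shows "seg d W 1 (H + 1) = mmul (d k) (seg d W (k + 1) (H + 1 - k)) (mmul (d (k - 1)) (W k) (seg d W 1 (k - 1)))"
proof -
  have "seg d W 1 (H + 1) = seg d W 1 ((k - 1) + (H + 2 - k))"
    using assms by (simp add: algebra_simps)
  also have "\<dots> = mmul (d (k - 1)) (seg d W k (H + 2 - k)) (seg d W 1 (k - 1))"
    using seg_split[OF assms(1), of 1 "k - 1" "H + 2 - k"] assms by simp
  also have "seg d W k (H + 2 - k) = mmul (d k) (seg d W (k + 1) (H + 1 - k)) (W k)"
  proof -
    have e: "H + 2 - k = 1 + (H + 1 - k)" using assms by simp
    have "seg d W k (1 + (H + 1 - k)) = mmul (d (k + 1 - 1)) (seg d W (k + 1) (H + 1 - k)) (seg d W k 1)"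
      by (rule seg_split[OF assms(1)]) (use assms in simp)
    then show ?thesis unfolding e seg_one[OF assms(1)] by simp
  qed
  finally show ?thesis by (simp add: mmul_assoc)
qed

lemma seg_upd_hi: "k < j \<Longrightarrow> seg d (W(k := X)) j n = seg d W j n"
  by (rule seg_cong) auto

lemma seg_upd_lo: "seg d (W(k := X)) 1 (k - 1) = seg d W 1 (k - 1)"
  by (rule seg_cong) auto

lemma mmul_lin: "mmul p A (mmul q (\<lambda>i j. X i j + t * D i j) B) =
   (\<lambda>i j. mmul p A (mmul q X B) i j + t * mmul p A (mmul q D B) i j)"
  by (simp add: mmul_def algebra_simps sum.distrib sum_distrib_left)

definition emat :: "nat \<Rightarrow> nat \<Rightarrow> mat" where
  "emat p q = (\<lambda>i j. if i = p \<and> j = q then 1 else 0)"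

lemma emat_mats: "p < m \<Longrightarrow> q < n \<Longrightarrow> emat p q \<in> mats m n"
  by (auto simp: mats_def emat_def)

lemma mmul_emat: "p < a \<Longrightarrow> q < b \<Longrightarrow> mmul a F (mmul b (emat p q) B) = (\<lambda>i j. F i p * B q j)"
proof (intro ext)
  fix i j assume pa: "p < a" and qb: "q < b"
  have in1: "mmul b (emat p q) B l j = (if l = p then B q j else 0)" for l
  proof -
    have "mmul b (emat p q) B l j = (\<Sum>k<b. if k = q then (if l = p then B q j else 0) else 0)"
      unfolding mmul_def emat_def by (rule sum.cong) auto
    then show ?thesis using qb by (simp add: sum.delta)
  qed
  have "mmul a F (mmul b (emat p q) B) i j = (\<Sum>l<a. F i l * mmul b (emat p q) B l j)"
    by (simp add: mmul_def)
  also have "\<dots> = (\<Sum>l<a. if l = p then F i p * B q j else 0)"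
    by (rule sum.cong) (auto simp: in1)
  finally have "mmul a F (mmul b (emat p q) B) i j = (\<Sum>l<a. if l = p then F i p * B q j else 0)" .
  then show "mmul a F (mmul b (emat p q) B) i j = F i p * B q j"
    using pa by (simp add: sum.delta)
qed

lemma frob_L2: "frob_norm m n A = L2_set (\<lambda>x. A (fst x) (snd x)) ({..<m} \<times> {..<n})"
  unfolding frob_norm_def frob_inner_def L2_set_def
  by (simp add: sum.cartesian_product power2_eq_square case_prod_beta)

lemma frob_nonneg[simp]: "0 \<le> frob_norm m n A"
  by (simp add: frob_L2)

lemma frob_inner_self_nonneg: "0 \<le> frob_inner m n A A"
  by (simp add: frob_inner_def sum_nonneg)

lemma frob_sq: "(frob_norm m n A)\<^sup>2 = frob_inner m n A A"
  by (simp add: frob_norm_def frob_inner_self_nonneg)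

lemma frob_tri: "frob_norm m n (\<lambda>i j. A i j + B i j) \<le> frob_norm m n A + frob_norm m n B"
  unfolding frob_L2 by (rule L2_set_triangle_ineq)

lemma frob_scale: "frob_norm m n (\<lambda>i j. t * A i j) = \<bar>t\<bar> * frob_norm m n A"
  unfolding frob_L2 L2_set_def
  by (simp add: power_mult_distrib real_sqrt_mult flip: sum_distrib_left)

lemma frob_minus: "frob_norm m n (\<lambda>i j. - A i j) = frob_norm m n A"
  using frob_scale[of m n "-1" A] by simp

lemma frob_emat: "p < m \<Longrightarrow> q < n \<Longrightarrow> frob_norm m n (emat p q) = 1"
proof -
  assume pq: "p < m" "q < n"
  have "frob_inner m n (emat p q) (emat p q) = (\<Sum>i<m. if i = p then 1 else 0)"
    unfolding frob_inner_def emat_def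
    by (rule sum.cong) (use pq in \<open>auto simp: if_distrib sum.delta cong: if_cong\<close>)
  also have "\<dots> = 1" using pq by (simp add: sum.delta)
  finally show ?thesis by (simp add: frob_norm_def)
qed

lemma sq_mmul_le: "(mmul p A B i j)\<^sup>2 \<le> (\<Sum>k<p. (A i k)\<^sup>2) * (\<Sum>k<p. (B k j)\<^sup>2)"
proof -
  have "\<bar>mmul p A B i j\<bar> \<le> (\<Sum>k<p. \<bar>A i k\<bar> * \<bar>B k j\<bar>)"
    unfolding mmul_def by (rule order_trans[OF sum_abs]) (simp add: abs_mult)
  also have "\<dots> \<le> L2_set (\<lambda>k. A i k) {..<p} * L2_set (\<lambda>k. B k j) {..<p}"
    by (rule L2_set_mult_ineq)
  finally have "\<bar>mmul p A B i j\<bar> \<le> L2_set (\<lambda>k. A i k) {..<p} * L2_set (\<lambda>k. B k j) {..<p}" .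
  then have "\<bar>mmul p A B i j\<bar>\<^sup>2 \<le> (L2_set (\<lambda>k. A i k) {..<p} * L2_set (\<lambda>k. B k j) {..<p})\<^sup>2"
    by (rule power_mono) simp
  then show ?thesis
    by (simp add: power_mult_distrib L2_set_def sum_nonneg)
qed

lemma frob_mmul: "frob_norm m n (mmul p A B) \<le> frob_norm m p A * frob_norm p n B"
proof -
  have "frob_inner m n (mmul p A B) (mmul p A B) \<le> (\<Sum>i<m. \<Sum>j<n. (\<Sum>k<p. (A i k)\<^sup>2) * (\<Sum>k<p. (B k j)\<^sup>2))"
    unfolding frob_inner_def
    by (intro sum_mono) (simp add: sq_mmul_le flip: power2_eq_square)
  also have "\<dots> = (\<Sum>i<m. \<Sum>k<p. (A i k)\<^sup>2) * (\<Sum>j<n. \<Sum>k<p. (B k j)\<^sup>2)"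
    by (simp add: sum_product)
  also have "(\<Sum>j<n. \<Sum>k<p. (B k j)\<^sup>2) = (\<Sum>k<p. \<Sum>j<n. (B k j)\<^sup>2)"
    by (rule sum.swap)
  also have "(\<Sum>i<m. \<Sum>k<p. (A i k)\<^sup>2) * (\<Sum>k<p. \<Sum>j<n. (B k j)\<^sup>2) = frob_inner m p A A * frob_inner p n B B"
    unfolding frob_inner_def by (simp add: power2_eq_square)
  finally have "frob_inner m n (mmul p A B) (mmul p A B) \<le> frob_inner m p A A * frob_inner p n B B" .
  then show ?thesis
    unfolding frob_norm_def by (simp add: real_sqrt_mult[symmetric])
qed

lemma pnorm_L2: "pnorm d H V W = L2_set (\<lambda>j. frob_norm (d j) (d (j - 1)) (msub (V j) (W j))) {1..H+1}"
  by (simp add: pnorm_def L2_set_def)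

lemma pnorm_nonneg[simp]: "0 \<le> pnorm d H V W"
  by (simp add: pnorm_L2)

lemma pnorm_tri: "pnorm d H V U \<le> pnorm d H V W + pnorm d H W U"
proof -
  have "pnorm d H V U \<le> L2_set (\<lambda>j. frob_norm (d j) (d (j - 1)) (msub (V j) (W j)) +
          frob_norm (d j) (d (j - 1)) (msub (W j) (U j))) {1..H+1}"
    unfolding pnorm_L2
  proof (rule L2_set_mono)
    fix j
    have "msub (V j) (U j) = (\<lambda>a b. msub (V j) (W j) a b + msub (W j) (U j) a b)"
      by (simp add: msub_def)
    then show "frob_norm (d j) (d (j - 1)) (msub (V j) (U j)) \<le> frob_norm (d j) (d (j - 1)) (msub (V j) (W j)) +
          frob_norm (d j) (d (j - 1)) (msub (W j) (U j))"
      using frob_tri by metis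
  qed simp
  also have "\<dots> \<le> pnorm d H V W + pnorm d H W U"
    unfolding pnorm_L2 by (rule L2_set_triangle_ineq)
  finally show ?thesis .
qed

lemma pnorm_self[simp]: "pnorm d H W W = 0"
  by (simp add: pnorm_def msub_def frob_norm_def frob_inner_def)

lemma pnorm_upd: "k \<in> {1..H+1} \<Longrightarrow> pnorm d H (V(k := X)) V = frob_norm (d k) (d (k - 1)) (msub X (V k))"
proof -
  assume k: "k \<in> {1..H+1}"
  have "pnorm d H (V(k := X)) V = L2_set (\<lambda>j. if j = k then frob_norm (d k) (d (k - 1)) (msub X (V k)) else 0) {1..H+1}"
    unfolding pnorm_L2
    by (rule L2_set_cong) (auto simp: msub_def frob_norm_def frob_inner_def)
  also have "\<dots> = frob_norm (d k) (d (k - 1)) (msub X (V k))"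
  proof -
    let ?f = "frob_norm (d k) (d (k - 1)) (msub X (V k))"
    have "(\<Sum>j\<in>{1..H+1}. (if j = k then ?f else 0)\<^sup>2) = (\<Sum>j\<in>{1..H+1}. if j = k then ?f\<^sup>2 else 0)"
      by (rule sum.cong) auto
    also have "\<dots> = ?f\<^sup>2" using k by (simp only: sum.delta finite_atLeastAtMost) simp
    finally show ?thesis unfolding L2_set_def by simp
  qed
  finally show ?thesis .
qed

lemma layer_le_pnorm: "k \<in> {1..H+1} \<Longrightarrow> frob_norm (d k) (d (k - 1)) (msub (V k) (W k)) \<le> pnorm d H V W"
  unfolding pnorm_L2 by (rule member_le_L2_set) auto

lemma kernel_exists:
  fixes X :: "'a \<Rightarrow> 'b \<Rightarrow> real"
  assumes "finite I" "finite S" "card I < card S"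
  shows "\<exists>n. (\<exists>j\<in>S. n j \<noteq> 0) \<and> (\<forall>j. j \<notin> S \<longrightarrow> n j = 0) \<and> (\<forall>i\<in>I. (\<Sum>j\<in>S. X i j * n j) = 0)"
  using assms
proof (induction I arbitrary: S X rule: finite_induct)
  case empty
  then have "S \<noteq> {}" by auto
  then obtain s where s: "s \<in> S" by blast
  show ?case by (rule exI[of _ "\<lambda>j. if j = s then 1 else 0"]) (use s in auto)
next
  case (insert r I)
  show ?case
  proof (cases "\<forall>j\<in>S. X r j = 0")
    case True
    obtain n where n: "\<exists>j\<in>S. n j \<noteq> 0" "\<forall>j. j \<notin> S \<longrightarrow> n j = 0" "\<forall>i\<in>I. (\<Sum>j\<in>S. X i j * n j) = 0"
      using insert.IH[of S X] insert.prems insert.hyps by auto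
    show ?thesis using n True by (intro exI[of _ n]) auto
  next
    case False
    then obtain c where c: "c \<in> S" "X r c \<noteq> 0" by auto
    define Y where "Y = (\<lambda>i j. X i j - X i c * X r j / X r c)"
    have cardS: "card I < card (S - {c})" using insert.prems insert.hyps c by auto
    obtain w where w: "\<exists>j\<in>S - {c}. w j \<noteq> 0" "\<forall>j. j \<notin> S - {c} \<longrightarrow> w j = 0"
        "\<forall>i\<in>I. (\<Sum>j\<in>S - {c}. Y i j * w j) = 0"
      using insert.IH[of "S - {c}" Y] cardS insert.prems by auto
    define t where "t = - (\<Sum>j\<in>S - {c}. X r j * w j) / X r c"
    define n where "n = w(c := t)"
    have sumS: "(\<Sum>j\<in>S. X i j * n j) = X i c * t + (\<Sum>j\<in>S - {c}. X i j * w j)" for i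
    proof -
      have "(\<Sum>j\<in>S. X i j * n j) = X i c * n c + (\<Sum>j\<in>S - {c}. X i j * n j)"
        using c insert.prems by (simp add: sum.remove)
      also have "(\<Sum>j\<in>S - {c}. X i j * n j) = (\<Sum>j\<in>S - {c}. X i j * w j)"
        by (rule sum.cong) (auto simp: n_def)
      finally show ?thesis by (simp add: n_def)
    qed
    have rowI: "(\<Sum>j\<in>S. X i j * n j) = 0" if i: "i \<in> I" for i
    proof -
      have "0 = (\<Sum>j\<in>S - {c}. Y i j * w j)" using w i by auto
      also have "\<dots> = (\<Sum>j\<in>S - {c}. X i j * w j) - X i c / X r c * (\<Sum>j\<in>S - {c}. X r j * w j)"
        by (simp add: Y_def algebra_simps sum_subtractf sum_distrib_left)
      finally have "(\<Sum>j\<in>S - {c}. X i j * w j) = - X i c * t"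
        using c by (simp add: t_def field_simps)
      then show ?thesis by (simp add: sumS)
    qed
    have rowr: "(\<Sum>j\<in>S. X r j * n j) = 0"
      using c by (simp add: sumS t_def)
    show ?thesis
    proof (intro exI[of _ n] conjI)
      show "\<exists>j\<in>S. n j \<noteq> 0" using w(1) by (auto simp: n_def)
      show "\<forall>j. j \<notin> S \<longrightarrow> n j = 0" using w(2) c by (auto simp: n_def)
      show "\<forall>i\<in>insert r I. (\<Sum>j\<in>S. X i j * n j) = 0" using rowI rowr by auto
    qed
  qed
qed

lemma right_null:
  fixes r e p :: nat and X :: "nat \<Rightarrow> nat \<Rightarrow> real"
  assumes "r \<le> e" "p < r" "v p \<noteq> 0" "\<forall>j<e. (\<Sum>i<r. v i * X i j) = 0"
  shows "\<exists>n. (\<exists>j<e. n j \<noteq> 0) \<and> (\<forall>j. e \<le> j \<longrightarrow> n j = 0) \<and> (\<forall>i<r. (\<Sum>j<e. X i j * n j) = 0)"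
proof -
  let ?I = "{..<r} - {p}"
  have "card ?I = r - 1" using assms by (simp add: card_Diff_singleton)
  then have "card ?I < card {..<e}" using assms by simp
  then obtain n where n: "\<exists>j\<in>{..<e}. n j \<noteq> 0" "\<forall>j. j \<notin> {..<e} \<longrightarrow> n j = 0"
      "\<forall>i\<in>?I. (\<Sum>j\<in>{..<e}. X i j * n j) = 0"
    using kernel_exists[of ?I "{..<e}" X] by auto
  have rp: "(\<Sum>j<e. X p j * n j) = 0"
  proof -
    have split: "(\<Sum>i<r. v i * X i j) = v p * X p j + (\<Sum>i\<in>?I. v i * X i j)" for j
      using assms by (simp add: sum.remove)
    have "v p * (\<Sum>j<e. X p j * n j) = (\<Sum>j<e. (v p * X p j) * n j)"
      by (simp add: sum_distrib_left mult.assoc)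
    also have "\<dots> = (\<Sum>j<e. (- (\<Sum>i\<in>?I. v i * X i j)) * n j)"
    proof (rule sum.cong[OF refl])
      fix j assume "j \<in> {..<e}"
      then have "v p * X p j + (\<Sum>i\<in>?I. v i * X i j) = 0" using assms(4) split by auto
      then have "v p * X p j = - (\<Sum>i\<in>?I. v i * X i j)" by linarith
      then show "v p * X p j * n j = - (\<Sum>i\<in>?I. v i * X i j) * n j" by simp
    qed
    also have "\<dots> = - (\<Sum>i\<in>?I. v i * (\<Sum>j<e. X i j * n j))"
      by (simp add: sum_distrib_left sum_distrib_right sum_negf mult.assoc sum.swap[of _ "{..<e}"])
    also have "\<dots> = 0" using n(3) by simp
    finally show ?thesis using assms by simp
  qed
  show ?thesis
  proof (intro exI[of _ n] conjI)
    show "\<exists>j<e. n j \<noteq> 0" using n(1) by auto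
    show "\<forall>j. e \<le> j \<longrightarrow> n j = 0" using n(2) by auto
    show "\<forall>i<r. (\<Sum>j<e. X i j * n j) = 0" using n(3) rp by auto
  qed
qed

lemma quad_form:
  fixes w :: "nat \<Rightarrow> real" and A :: "nat \<Rightarrow> nat \<Rightarrow> real"
  shows   "(\<Sum>i<m. w i * (\<Sum>j<m. (\<Sum>k<n. A i k * A j k) * w j)) = (\<Sum>k<n. (\<Sum>i<m. w i * A i k)\<^sup>2)"
proof -
  have "(\<Sum>i<m. w i * (\<Sum>j<m. (\<Sum>k<n. A i k * A j k) * w j)) = (\<Sum>i<m. \<Sum>j<m. \<Sum>k<n. (w i * A i k) * (w j * A j k))"
  proof (rule sum.cong[OF refl])
    fix i
    have "w i * (\<Sum>j<m. (\<Sum>k<n. A i k * A j k) * w j) = (\<Sum>j<m. w i * ((\<Sum>k<n. A i k * A j k) * w j))"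
      by (simp add: sum_distrib_left)
    also have "\<dots> = (\<Sum>j<m. \<Sum>k<n. (w i * A i k) * (w j * A j k))"
      by (rule sum.cong[OF refl]) (simp add: sum_distrib_left sum_distrib_right mult_ac)
    finally show "w i * (\<Sum>j<m. (\<Sum>k<n. A i k * A j k) * w j) = (\<Sum>j<m. \<Sum>k<n. (w i * A i k) * (w j * A j k))" .
  qed
  also have "\<dots> = (\<Sum>i<m. \<Sum>k<n. \<Sum>j<m. (w i * A i k) * (w j * A j k))"
    by (rule sum.cong[OF refl]) (rule sum.swap)
  also have "\<dots> = (\<Sum>k<n. \<Sum>i<m. \<Sum>j<m. (w i * A i k) * (w j * A j k))"
    by (rule sum.swap)
  also have "\<dots> = (\<Sum>k<n. (\<Sum>i<m. w i * A i k)\<^sup>2)"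
    by (simp add: power2_eq_square sum_product)
  finally show ?thesis .
qed

lemma frr_solve:
  assumes "full_row_rank m n A"
  shows "\<exists>x. (\<forall>k. n \<le> k \<longrightarrow> x k = 0) \<and> (\<forall>i<m. (\<Sum>k<n. A i k * x k) = b i)"
proof -
  define G where "G = (\<lambda>i j. \<Sum>k<n. A i k * A j k)"
  define X where "X = (\<lambda>i j. if j < m then G i j else b i)"
  have "card {..<m} < card {..<m+1}" by simp
  then obtain w where w: "\<exists>j\<in>{..<m+1}. w j \<noteq> 0" "\<forall>i\<in>{..<m}. (\<Sum>j\<in>{..<m+1}. X i j * w j) = 0"
    using kernel_exists[of "{..<m}" "{..<m+1}" X] by auto
  have eq: "(\<Sum>j<m. G i j * w j) + b i * w m = 0" if "i < m" for i
  proof -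
    have "(\<Sum>j\<in>{..<m+1}. X i j * w j) = (\<Sum>j<m. X i j * w j) + X i m * w m"
      by simp
    then show ?thesis using w(2) that by (simp add: X_def)
  qed
  have wm: "w m \<noteq> 0"
  proof
    assume wm0: "w m = 0"
    then have Gw: "(\<Sum>j<m. G i j * w j) = 0" if "i < m" for i using eq[OF that] by simp
    have "(\<Sum>k<n. (\<Sum>i<m. w i * A i k)\<^sup>2) = 0"
      using quad_form[where m=m and w=w and n=n and A=A] Gw by (simp add: G_def)
    then have "\<forall>k\<in>{..<n}. (\<Sum>i<m. w i * A i k)\<^sup>2 = 0"
      by (subst (asm) sum_nonneg_eq_0_iff) auto
    then have "\<forall>k<n. (\<Sum>i<m. w i * A i k) = 0" by auto
    then have "\<forall>i<m. w i = 0" using assms unfolding full_row_rank_def by blast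
    then show False using w(1) wm0 by (auto simp: less_Suc_eq)
  qed
  define x where "x = (\<lambda>k. if k < n then - (\<Sum>j<m. A j k * w j) / w m else 0)"
  have "(\<Sum>k<n. A i k * x k) = b i" if "i < m" for i
  proof -
    have "(\<Sum>k<n. A i k * x k) = (\<Sum>k<n. (\<Sum>j<m. A i k * A j k * w j) * (- 1 / w m))"
    proof (rule sum.cong[OF refl])
      fix k assume "k \<in> {..<n}"
      then have "x k = - (\<Sum>j<m. A j k * w j) / w m" by (simp add: x_def)
      then show "A i k * x k = (\<Sum>j<m. A i k * A j k * w j) * (- 1 / w m)"
        by (simp add: sum_distrib_left mult.assoc)
    qed
    also have "\<dots> = (\<Sum>k<n. \<Sum>j<m. A i k * A j k * w j) * (- 1 / w m)"
      by (simp only: sum_distrib_right)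
    also have "(\<Sum>k<n. \<Sum>j<m. A i k * A j k * w j) = (\<Sum>j<m. \<Sum>k<n. A i k * A j k * w j)"
      by (rule sum.swap)
    also have "\<dots> = (\<Sum>j<m. G i j * w j)"
      by (simp only: G_def sum_distrib_right)
    finally have "(\<Sum>k<n. A i k * x k) = - (\<Sum>j<m. G i j * w j) / w m" by simp
    also have "\<dots> = b i" using eq[OF that] wm by (simp add: field_simps)
    finally show ?thesis .
  qed
  then show ?thesis by (intro exI[of _ x]) (auto simp: x_def)
qed

lemma right_inverse:
  assumes "full_row_rank m n A" "A \<in> mats m n"
  shows "\<exists>Y. Y \<in> mats n m \<and> mmul n A Y = ident m"
proof -
  have ex: "\<forall>i. \<exists>x. (\<forall>k. n \<le> k \<longrightarrow> x k = 0) \<and> (\<forall>i'<m. (\<Sum>k<n. A i' k * x k) = (if i' = i then 1 else 0))"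
  proof
    fix i
    show "\<exists>x. (\<forall>k. n \<le> k \<longrightarrow> x k = 0) \<and> (\<forall>i'<m. (\<Sum>k<n. A i' k * x k) = (if i' = i then 1 else 0))"
      using frr_solve[OF assms(1), of "\<lambda>i'. if i' = i then 1 else 0"] by simp
  qed
  obtain f where f0: "\<forall>i. (\<forall>k. n \<le> k \<longrightarrow> f i k = 0) \<and> (\<forall>i'<m. (\<Sum>k<n. A i' k * f i k) = (if i' = i then 1 else 0))"
    using choice[OF ex] by blast
  have f: "\<And>i. (\<forall>k. n \<le> k \<longrightarrow> f i k = 0)"
      "\<And>i i'. i' < m \<Longrightarrow> (\<Sum>k<n. A i' k * f i k) = (if i' = i then 1 else 0)"
    using f0 by auto
  define Y where "Y = (\<lambda>k i. if i < m then f i k else 0)"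
  have "Y \<in> mats n m" using f(1) by (auto simp: mats_def Y_def)
  moreover have "mmul n A Y = ident m"
  proof (intro ext)
    fix i i'
    show "mmul n A Y i i' = ident m i i'"
    proof (cases "i' < m")
      case False then show ?thesis by (simp add: mmul_def Y_def ident_def)
    next
      case True
      show ?thesis
      proof (cases "i < m")
        case True': True
        have "(\<Sum>k<n. A i k * f i' k) = (if i = i' then 1 else 0)" using f(2)[of i i'] True' by simp
        then show ?thesis using True True' by (simp add: mmul_def Y_def ident_def)
      next
        case False
        then have "A i k = 0" for k using assms(2) by (simp add: mats_def)
        then show ?thesis using False by (simp add: mmul_def ident_def)
      qed
    qed
  qed
  ultimately show ?thesis by blast
qed

definition tr :: "mat \<Rightarrow> mat" where "tr A = (\<lambda>i j. A j i)"

lemma left_inverse: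
  assumes "full_col_rank m n B" "B \<in> mats m n"
  shows "\<exists>Z. Z \<in> mats n m \<and> mmul m Z B = ident n"
proof -
  have "full_row_rank n m (tr B)"
    using assms(1) unfolding full_row_rank_def full_col_rank_def tr_def by (simp add: mult.commute)
  moreover have "tr B \<in> mats n m" using assms(2) by (auto simp: mats_def tr_def)
  ultimately obtain Y where Y: "Y \<in> mats m n" "mmul m (tr B) Y = ident n"
    using right_inverse by blast
  have "mmul m (tr Y) B = ident n"
  proof (intro ext)
    fix i j
    have "mmul m (tr Y) B i j = mmul m (tr B) Y j i" by (simp add: mmul_def tr_def mult.commute)
    then show "mmul m (tr Y) B i j = ident n i j" using Y(2) by (auto simp: ident_def)
  qed
  moreover have "tr Y \<in> mats n m" using Y(1) by (auto simp: mats_def tr_def)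
  ultimately show ?thesis by blast
qed

lemma frob_inner_scale: "frob_inner m n R (\<lambda>i j. t * K i j) = t * frob_inner m n R K"
  by (simp add: frob_inner_def sum_distrib_left mult_ac)

lemma aux_ineq:
  fixes a1 a2 G e u Y s :: real
  shows "\<bar>a1 - G\<bar> \<le> Y \<Longrightarrow> \<bar>a2 + G\<bar> \<le> Y \<Longrightarrow> s = 1 \<or> s = -1 \<Longrightarrow> - e * u \<le> s * a1 \<Longrightarrow> - e * u \<le> s * a2 \<Longrightarrow> \<bar>G\<bar> \<le> e * u + Y"
  by (auto simp: abs_le_iff)

lemma dir_zero:
  assumes grad: "mat_has_grad m n f R P" and K: "K \<in> mats m n" and s: "s = 1 \<or> s = -1"
    and lb: "\<forall>e>0. \<exists>\<tau>>0. \<forall>t. 0 < \<bar>t\<bar> \<and> \<bar>t\<bar> < \<tau> \<longrightarrow> - e * \<bar>t\<bar> \<le> s * (f (madd P (\<lambda>i j. t * K i j)) - f P)"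
  shows "frob_inner m n R K = 0"
proof -
  define g where "g = frob_inner m n R K"
  define c where "c = frob_norm m n K"
  have c0: "0 \<le> c" by (simp add: c_def)
  have bound: "\<bar>g\<bar> \<le> e * (1 + c)" if e: "e > 0" for e
  proof -
    obtain \<delta> where \<delta>: "\<delta> > 0" "\<forall>E\<in>mats m n. frob_norm m n E < \<delta> \<longrightarrow>
        \<bar>f (madd P E) - f P - frob_inner m n R E\<bar> \<le> e * frob_norm m n E"
      using grad e unfolding mat_has_grad_def by blast
    obtain \<tau> where \<tau>: "\<tau> > 0" "\<forall>t. 0 < \<bar>t\<bar> \<and> \<bar>t\<bar> < \<tau> \<longrightarrow> - e * \<bar>t\<bar> \<le> s * (f (madd P (\<lambda>i j. t * K i j)) - f P)"
      using lb e by blast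
    define u where "u = min \<tau> (\<delta> / (c + 1)) / 2"
    have a0: "0 < \<delta> / (c + 1)" using \<delta> c0 by simp
    have u0: "u > 0" using \<tau> a0 by (simp add: u_def)
    have ut: "u < \<tau>" using \<tau> by (simp add: u_def)
    have uc: "u * c < \<delta>"
    proof -
      have "min \<tau> (\<delta> / (c + 1)) \<le> \<delta> / (c + 1)" by simp
      then have "u < \<delta> / (c + 1)" using a0 unfolding u_def
        by (smt (verit) field_sum_of_halves)
      then have "u * (c + 1) < \<delta>" using c0 by (simp add: field_simps)
      then show ?thesis using u0 by (simp add: algebra_simps)
    qed
    have est: "\<bar>f (madd P (\<lambda>i j. t * K i j)) - f P - t * g\<bar> \<le> e * (u * c)" if t: "\<bar>t\<bar> = u" for t
    proof -
      have Em: "(\<lambda>i j. t * K i j) \<in> mats m n" using K by (simp add: mats_def)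
      have fr: "frob_norm m n (\<lambda>i j. t * K i j) = u * c" using t by (simp add: frob_scale c_def)
      have "\<bar>f (madd P (\<lambda>i j. t * K i j)) - f P - frob_inner m n R (\<lambda>i j. t * K i j)\<bar> \<le> e * frob_norm m n (\<lambda>i j. t * K i j)"
        using \<delta>(2)[rule_format, OF Em] fr uc by simp
      then show ?thesis using fr by (simp add: frob_inner_scale g_def)
    qed
    have l1: "- e * u \<le> s * (f (madd P (\<lambda>i j. u * K i j)) - f P)" using \<tau>(2)[rule_format, of u] u0 ut by auto
    have l2: "- e * u \<le> s * (f (madd P (\<lambda>i j. (- u) * K i j)) - f P)" using \<tau>(2)[rule_format, of "- u"] u0 ut by auto
    have e1: "\<bar>f (madd P (\<lambda>i j. u * K i j)) - f P - u * g\<bar> \<le> e * (u * c)" using est u0 by simp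
    have e2: "\<bar>f (madd P (\<lambda>i j. (- u) * K i j)) - f P - (- u) * g\<bar> \<le> e * (u * c)" using est[of "- u"] u0 by simp
    have "\<bar>u * g\<bar> \<le> e * u + e * (u * c)"
    proof (rule aux_ineq[OF _ _ s l1 l2])
      show "\<bar>f (madd P (\<lambda>i j. u * K i j)) - f P - u * g\<bar> \<le> e * (u * c)" by fact
      show "\<bar>f (madd P (\<lambda>i j. (- u) * K i j)) - f P + u * g\<bar> \<le> e * (u * c)" using e2 by simp
    qed
    then have "u * \<bar>g\<bar> \<le> u * (e * (1 + c))" using u0 by (simp add: abs_mult algebra_simps)
    then show ?thesis using u0 by simp
  qed
  show ?thesis
  proof (rule ccontr)
    assume "frob_inner m n R K \<noteq> 0"
    then have g0: "\<bar>g\<bar> > 0" by (simp add: g_def)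
    have "\<bar>g\<bar> \<le> (\<bar>g\<bar> / (2 * (1 + c))) * (1 + c)" using bound[of "\<bar>g\<bar> / (2 * (1 + c))"] g0 c0 by simp
    also have "\<dots> = \<bar>g\<bar> / 2" using c0 by (simp add: field_simps)
    finally show False using g0 by simp
  qed
qed

definition Kmat :: "(nat \<Rightarrow> nat) \<Rightarrow> nat \<Rightarrow> (nat \<Rightarrow> mat) \<Rightarrow> nat \<Rightarrow> nat \<Rightarrow> nat \<Rightarrow> mat" where
  "Kmat d H W k p q = (\<lambda>i j. seg d W (k + 1) (H + 1 - k) i p * seg d W 1 (k - 1) q j)"

lemma net_pert:
  assumes W: "lay d W" and k: "1 \<le> k" "k \<le> H + 1" and pq: "p < d k" "q < d (k - 1)"
  shows "seg d (W(k := madd (W k) (\<lambda>i j. t * emat p q i j))) 1 (H + 1)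
       = madd (seg d W 1 (H + 1)) (\<lambda>i j. t * Kmat d H W k p q i j)"
    and "Kmat d H W k p q \<in> mats (d (H + 1)) (d 0)"
proof -
  let ?X = "madd (W k) (\<lambda>i j. t * emat p q i j)"
  have Xm: "?X \<in> mats (d k) (d (k - 1))"
    using W pq unfolding lay_def by (auto simp: mats_def madd_def emat_def)
  have W': "lay d (W(k := ?X))" by (rule lay_upd[OF W Xm])
  have "seg d (W(k := ?X)) 1 (H + 1) = mmul (d k) (seg d W (k + 1) (H + 1 - k)) (mmul (d (k - 1)) ?X (seg d W 1 (k - 1)))"
  proof -
    have e1: "seg d (W(k := ?X)) 1 (H + 1) = mmul (d k) (seg d (W(k := ?X)) (k + 1) (H + 1 - k)) (mmul (d (k - 1)) ((W(k := ?X)) k) (seg d (W(k := ?X)) 1 (k - 1)))"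
      by (rule layer_split[OF W' k])
    have h1: "seg d (W(k := ?X)) (k + 1) (H + 1 - k) = seg d W (k + 1) (H + 1 - k)" by (rule seg_upd_hi) simp
    have h2: "seg d (W(k := ?X)) 1 (k - 1) = seg d W 1 (k - 1)" by (rule seg_upd_lo)
    show ?thesis using e1 unfolding h1 h2 fun_upd_same .
  qed
  also have "\<dots> = (\<lambda>i j. mmul (d k) (seg d W (k + 1) (H + 1 - k)) (mmul (d (k - 1)) (W k) (seg d W 1 (k - 1))) i j
       + t * mmul (d k) (seg d W (k + 1) (H + 1 - k)) (mmul (d (k - 1)) (emat p q) (seg d W 1 (k - 1))) i j)"
    unfolding madd_def by (rule mmul_lin)
  also have "\<dots> = madd (seg d W 1 (H + 1)) (\<lambda>i j. t * Kmat d H W k p q i j)"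
    using layer_split[OF W k] mmul_emat[OF pq] by (simp add: madd_def Kmat_def)
  finally show "seg d (W(k := ?X)) 1 (H + 1) = madd (seg d W 1 (H + 1)) (\<lambda>i j. t * Kmat d H W k p q i j)" .
  have F: "seg d W (k + 1) (H + 1 - k) \<in> mats (d (H + 1)) (d k)"
    using seg_mats[OF W, of "k + 1" "H + 1 - k"] k by simp
  have B: "seg d W 1 (k - 1) \<in> mats (d (k - 1)) (d 0)"
    using seg_mats[OF W, of 1 "k - 1"] k by simp
  show "Kmat d H W k p q \<in> mats (d (H + 1)) (d 0)"
    using F B by (auto simp: mats_def Kmat_def)
qed

lemma crit_grad:
  assumes W: "W \<in> params d H" and crit: "p_critical d H (\<lambda>W. l0 (seg d W 1 (H + 1))) W"
    and grad: "mat_has_grad (d (H + 1)) (d 0) l0 R (seg d W 1 (H + 1))"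
    and k: "k \<in> {1..H+1}" and pq: "p < d k" "q < d (k - 1)"
  shows "frob_inner (d (H + 1)) (d 0) R (Kmat d H W k p q) = 0"
proof -
  have L: "lay d W" using params_lay[OF W] .
  have k1: "1 \<le> k" "k \<le> H + 1" using k by auto
  note np = net_pert[OF L k1 pq]
  have cg: "mat_has_grad (d k) (d (k - 1)) (\<lambda>X. l0 (seg d (W(k := X)) 1 (H + 1))) zmat (W k)"
    using crit k unfolding p_critical_def by blast
  show ?thesis
  proof (rule dir_zero[OF grad np(2), of 1])
    show "\<forall>e>0. \<exists>\<tau>>0. \<forall>t. 0 < \<bar>t\<bar> \<and> \<bar>t\<bar> < \<tau> \<longrightarrow> - e * \<bar>t\<bar> \<le> 1 * (l0 (madd (seg d W 1 (H + 1)) (\<lambda>i j. t * Kmat d H W k p q i j)) - l0 (seg d W 1 (H + 1)))"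
    proof (intro allI impI)
      fix e :: real assume e: "e > 0"
      obtain \<delta> where \<delta>: "\<delta> > 0" "\<forall>E\<in>mats (d k) (d (k - 1)). frob_norm (d k) (d (k - 1)) E < \<delta> \<longrightarrow>
        \<bar>l0 (seg d (W(k := madd (W k) E)) 1 (H + 1)) - l0 (seg d (W(k := W k)) 1 (H + 1)) - frob_inner (d k) (d (k - 1)) zmat E\<bar> \<le> e * frob_norm (d k) (d (k - 1)) E"
        using cg e unfolding mat_has_grad_def by blast
      show "\<exists>\<tau>>0. \<forall>t. 0 < \<bar>t\<bar> \<and> \<bar>t\<bar> < \<tau> \<longrightarrow> - e * \<bar>t\<bar> \<le> 1 * (l0 (madd (seg d W 1 (H + 1)) (\<lambda>i j. t * Kmat d H W k p q i j)) - l0 (seg d W 1 (H + 1)))"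
      proof (intro exI[of _ \<delta>] conjI allI impI)
        show "\<delta> > 0" by fact
        fix t :: real assume t: "0 < \<bar>t\<bar> \<and> \<bar>t\<bar> < \<delta>"
        have Em: "(\<lambda>i j. t * emat p q i j) \<in> mats (d k) (d (k - 1))"
          using pq by (auto simp: mats_def emat_def)
        have fr: "frob_norm (d k) (d (k - 1)) (\<lambda>i j. t * emat p q i j) = \<bar>t\<bar>"
          using pq by (simp add: frob_scale frob_emat)
        have z: "frob_inner (d k) (d (k - 1)) zmat E = 0" for E by (simp add: frob_inner_def zmat_def)
        have "\<bar>l0 (seg d (W(k := madd (W k) (\<lambda>i j. t * emat p q i j))) 1 (H + 1)) - l0 (seg d W 1 (H + 1))\<bar> \<le> e * \<bar>t\<bar>"
          using \<delta>(2)[rule_format, OF Em] fr t z by simp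
        then show "- e * \<bar>t\<bar> \<le> 1 * (l0 (madd (seg d W 1 (H + 1)) (\<lambda>i j. t * Kmat d H W k p q i j)) - l0 (seg d W 1 (H + 1)))"
          using np(1)[of t] by simp
      qed
    qed
  qed simp
qed

lemma extr_grad:
  assumes W: "W \<in> params d H" and s: "s = 1 \<or> s = -1"
    and ext: "\<exists>\<epsilon>>0. \<forall>V\<in>params d H. pnorm d H V W < \<epsilon> \<longrightarrow> s * l0 (seg d W 1 (H + 1)) \<le> s * l0 (seg d V 1 (H + 1))"
    and grad: "mat_has_grad (d (H + 1)) (d 0) l0 R (seg d W 1 (H + 1))"
    and k: "k \<in> {1..H+1}" and pq: "p < d k" "q < d (k - 1)"
  shows "frob_inner (d (H + 1)) (d 0) R (Kmat d H W k p q) = 0"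
proof -
  have L: "lay d W" using params_lay[OF W] .
  have k1: "1 \<le> k" "k \<le> H + 1" using k by auto
  note np = net_pert[OF L k1 pq]
  obtain \<epsilon> where \<epsilon>: "\<epsilon> > 0" "\<forall>V\<in>params d H. pnorm d H V W < \<epsilon> \<longrightarrow> s * l0 (seg d W 1 (H + 1)) \<le> s * l0 (seg d V 1 (H + 1))"
    using ext by blast
  show ?thesis
  proof (rule dir_zero[OF grad np(2) s])
    show "\<forall>e>0. \<exists>\<tau>>0. \<forall>t. 0 < \<bar>t\<bar> \<and> \<bar>t\<bar> < \<tau> \<longrightarrow> - e * \<bar>t\<bar> \<le> s * (l0 (madd (seg d W 1 (H + 1)) (\<lambda>i j. t * Kmat d H W k p q i j)) - l0 (seg d W 1 (H + 1)))"
    proof (intro allI impI exI[of _ \<epsilon>] conjI)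
      show "\<epsilon> > 0" by fact
      fix e t :: real assume e: "e > 0" and t: "0 < \<bar>t\<bar> \<and> \<bar>t\<bar> < \<epsilon>"
      let ?X = "madd (W k) (\<lambda>i j. t * emat p q i j)"
      have Xm: "?X \<in> mats (d k) (d (k - 1))"
        using L pq unfolding lay_def by (auto simp: mats_def madd_def emat_def)
      have V: "W(k := ?X) \<in> params d H" by (rule params_upd[OF W k Xm])
      have "pnorm d H (W(k := ?X)) W = frob_norm (d k) (d (k - 1)) (msub ?X (W k))"
        by (rule pnorm_upd[OF k])
      also have "msub ?X (W k) = (\<lambda>i j. t * emat p q i j)" by (simp add: msub_def madd_def)
      also have "frob_norm (d k) (d (k - 1)) (\<lambda>i j. t * emat p q i j) = \<bar>t\<bar>"
        using pq by (simp add: frob_scale frob_emat)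
      finally have "pnorm d H (W(k := ?X)) W = \<bar>t\<bar>" .
      then have "pnorm d H (W(k := ?X)) W < \<epsilon>" using t by linarith
      then have "s * l0 (seg d W 1 (H + 1)) \<le> s * l0 (seg d (W(k := ?X)) 1 (H + 1))" using \<epsilon>(2) V by blast
      then have "0 \<le> s * (l0 (madd (seg d W 1 (H + 1)) (\<lambda>i j. t * Kmat d H W k p q i j)) - l0 (seg d W 1 (H + 1)))"
        using np(1)[of t] by (simp add: algebra_simps)
      moreover have "- e * \<bar>t\<bar> \<le> 0" using e by simp
      ultimately show "- e * \<bar>t\<bar> \<le> s * (l0 (madd (seg d W 1 (H + 1)) (\<lambda>i j. t * Kmat d H W k p q i j)) - l0 (seg d W 1 (H + 1)))"
        by linarith
    qed
  qed
qed

lemma mmul_madd_left: "mmul q (madd X (\<lambda>i j. t * N i j)) B = (\<lambda>i j. mmul q X B i j + t * mmul q N B i j)"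
  by (simp add: mmul_def madd_def algebra_simps sum.distrib sum_distrib_left)

lemma mmul_madd_right: "mmul q A (madd X (\<lambda>i j. t * N i j)) = (\<lambda>i j. mmul q A X i j + t * mmul q A N i j)"
  by (simp add: mmul_def madd_def algebra_simps sum.distrib sum_distrib_left)

lemma mmul_colvec: "c < q \<Longrightarrow> mmul q (\<lambda>a b. n a * (if b = c then 1 else 0)) B = (\<lambda>i j. n i * B c j)"
proof (intro ext)
  fix i j assume c: "c < q"
  have "mmul q (\<lambda>a b. n a * (if b = c then 1 else 0)) B i j = (\<Sum>l<q. if l = c then n i * B c j else 0)"
    unfolding mmul_def by (rule sum.cong) auto
  then show "mmul q (\<lambda>a b. n a * (if b = c then 1 else 0)) B i j = n i * B c j" using c by (simp add: sum.delta)
qed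

lemma mmul_rowvec: "c < q \<Longrightarrow> mmul q A (\<lambda>a b. (if a = c then 1 else 0) * n b) = (\<lambda>i j. A i c * n j)"
proof (intro ext)
  fix i j assume c: "c < q"
  have "mmul q A (\<lambda>a b. (if a = c then 1 else 0) * n b) i j = (\<Sum>l<q. if l = c then A i c * n j else 0)"
    unfolding mmul_def by (rule sum.cong) auto
  then show "mmul q A (\<lambda>a b. (if a = c then 1 else 0) * n b) i j = A i c * n j" using c by (simp add: sum.delta)
qed

lemma mmul_null_right:
  assumes "M \<in> mats r e" "\<forall>i<r. (\<Sum>l<e. M i l * n l) = 0"
  shows "mmul e M (\<lambda>a b. n a * (if b = c then 1 else 0)) = (\<lambda>i j. 0)"
proof (intro ext)
  fix i j
  have "mmul e M (\<lambda>a b. n a * (if b = c then 1 else 0)) i j = (if j = c then (\<Sum>l<e. M i l * n l) else 0)"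
    by (simp add: mmul_def)
  also have "\<dots> = 0"
  proof (cases "i < r")
    case True then show ?thesis using assms(2) by simp
  next
    case False then show ?thesis using assms(1) by (simp add: mats_def)
  qed
  finally show "mmul e M (\<lambda>a b. n a * (if b = c then 1 else 0)) i j = 0" .
qed

lemma mmul_null_left:
  assumes "M \<in> mats e r" "\<forall>j<r. (\<Sum>l<e. M l j * n l) = 0"
  shows "mmul e (\<lambda>a b. (if a = c then 1 else 0) * n b) M = (\<lambda>i j. 0)"
proof (intro ext)
  fix i j
  have "mmul e (\<lambda>a b. (if a = c then 1 else 0) * n b) M i j = (if i = c then (\<Sum>l<e. M l j * n l) else 0)"
    by (simp add: mmul_def mult.commute)
  also have "\<dots> = 0"
  proof (cases "j < r")
    case True then show ?thesis using assms(2) by simp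
  next
    case False then show ?thesis using assms(1) by (simp add: mats_def)
  qed
  finally show "mmul e (\<lambda>a b. (if a = c then 1 else 0) * n b) M i j = 0" .
qed

lemma Kmat_rows: "frob_inner m n R (Kmat d H V k p q) =
   (\<Sum>a<m. (\<Sum>b<n. R a b * seg d V 1 (k - 1) q b) * seg d V (k + 1) (H + 1 - k) a p)"
  unfolding frob_inner_def Kmat_def by (rule sum.cong[OF refl]) (simp add: sum_distrib_left sum_distrib_right mult_ac)

lemma Kmat_cols: "frob_inner m n R (Kmat d H V k p q) =
   (\<Sum>b<n. seg d V 1 (k - 1) q b * (\<Sum>a<m. seg d V (k + 1) (H + 1 - k) a p * R a b))"
  by (simp add: frob_inner_def Kmat_def sum_distrib_left sum_distrib_right mult_ac sum.swap[of _ "{..<n}"])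

lemma ident_frr: "full_row_rank n n (ident n)"
proof -
  have "(\<Sum>i<n. c i * ident n i j) = c j" if "j < n" for c j
  proof -
    have "(\<Sum>i<n. c i * ident n i j) = (\<Sum>i<n. if i = j then c j else 0)"
      unfolding ident_def by (rule sum.cong) auto
    then show ?thesis using that by (simp add: sum.delta)
  qed
  then show ?thesis unfolding full_row_rank_def by auto
qed

lemma ident_fcr: "full_col_rank n n (ident n)"
proof -
  have "(\<Sum>j<n. ident n i j * c j) = c i" if "i < n" for c i
  proof -
    have "(\<Sum>j<n. ident n i j * c j) = (\<Sum>j<n. if j = i then c i else 0)"
      unfolding ident_def by (rule sum.cong) auto
    then show ?thesis using that by (simp add: sum.delta)
  qed
  then show ?thesis unfolding full_col_rank_def by auto
qed

lemma sum_ident_right: "j < n \<Longrightarrow> (\<Sum>b<n. R i b * ident n j b) = R i j"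
proof -
  assume j: "j < n"
  have "(\<Sum>b<n. R i b * ident n j b) = (\<Sum>b<n. if b = j then R i j else 0)"
    unfolding ident_def by (rule sum.cong) auto
  then show ?thesis using j by (simp add: sum.delta)
qed

lemma sum_ident_left: "j < n \<Longrightarrow> (\<Sum>a<n. ident n a j * R a b) = R j b"
proof -
  assume j: "j < n"
  have "(\<Sum>a<n. ident n a j * R a b) = (\<Sum>a<n. if a = j then R j b else 0)"
    unfolding ident_def by (rule sum.cong) auto
  then show ?thesis using j by (simp add: sum.delta)
qed

lemma seg_Suc1: "seg d V 1 (Suc m) = mmul (d m) (V (Suc m)) (seg d V 1 m)"
  by simp

lemma small_t:
  fixes \<delta> f :: real
  assumes "\<delta> > 0" "f \<ge> 0"
  shows "\<delta> / (2 * (f + 1)) > 0" "\<delta> / (2 * (f + 1)) * f < \<delta> / 2"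
proof -
  show "\<delta> / (2 * (f + 1)) > 0" using assms by simp
  have "\<delta> * f < \<delta> * (f + 1)" using assms by simp
  then show "\<delta> / (2 * (f + 1)) * f < \<delta> / 2" using assms by (simp add: field_simps)
qed

lemma low_chain:
  fixes d :: "nat \<Rightarrow> nat" and W :: "nat \<Rightarrow> mat"
  assumes W: "W \<in> params d H" and wid: "\<forall>j\<in>{1..H}. d (H+1) \<le> d j"
  shows "m \<le> H \<Longrightarrow> M \<in> mats (d (H+1)) (d m) \<Longrightarrow>
    (\<exists>v. (\<exists>i<d (H+1). v i \<noteq> 0) \<and> (\<forall>j<d m. (\<Sum>i<d (H+1). v i * M i j) = 0)) \<Longrightarrow> \<delta> > 0 \<Longrightarrow>
    (\<forall>V\<in>params d H. (\<forall>j>m. V j = W j) \<longrightarrow> pnorm d H V W < \<delta> \<longrightarrow>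
        mmul (d m) M (seg d V 1 m) = mmul (d m) M (seg d W 1 m) \<longrightarrow>
        (\<forall>i<d (H+1). \<forall>c<d m. (\<Sum>b<d 0. R i b * seg d V 1 m c b) = 0)) \<Longrightarrow>
    \<forall>i<d (H+1). \<forall>b<d 0. R i b = 0"
proof (induction m arbitrary: M \<delta>)
  case 0
  have "\<forall>i<d (H+1). \<forall>c<d 0. (\<Sum>b<d 0. R i b * seg d W 1 0 c b) = 0"
    using 0(5) W 0(4) by simp
  then show ?case by (simp add: sum_ident_right)
next
  case (Suc m)
  let ?dy = "d (H+1)"
  note L = params_lay[OF W]
  have m1: "Suc m \<in> {1..H}" "Suc m \<in> {1..H+1}" using Suc.prems by auto
  obtain v p0 where v: "p0 < ?dy" "v p0 \<noteq> 0" "\<forall>j<d (Suc m). (\<Sum>i<?dy. v i * M i j) = 0"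
    using Suc.prems(3) by blast
  have wd: "?dy \<le> d (Suc m)" using wid m1 by blast
  obtain n where n: "\<exists>j<d (Suc m). n j \<noteq> 0" "\<forall>j. d (Suc m) \<le> j \<longrightarrow> n j = 0"
      "\<forall>i<?dy. (\<Sum>j<d (Suc m). M i j * n j) = 0"
    using right_null[of ?dy "d (Suc m)" p0 v M] v wd by blast
  obtain r0 where r0: "r0 < d (Suc m)" "n r0 \<noteq> 0" using n(1) by blast
  define M' where "M' = mmul (d (Suc m)) M (W (Suc m))"
  have WSm: "W (Suc m) \<in> mats (d (Suc m)) (d m)" using L unfolding lay_def by (metis diff_Suc_1)
  have M'm: "M' \<in> mats ?dy (d m)" using Suc.prems(2) WSm by (simp add: M'_def mmul_mats)
  have M'v: "\<forall>j<d m. (\<Sum>i<?dy. v i * M' i j) = 0"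
  proof (intro allI impI)
    fix j assume "j < d m"
    have "(\<Sum>i<?dy. v i * M' i j) = (\<Sum>i<?dy. \<Sum>l<d (Suc m). v i * M i l * W (Suc m) l j)"
      by (simp add: M'_def mmul_def sum_distrib_left mult_ac)
    also have "\<dots> = (\<Sum>l<d (Suc m). \<Sum>i<?dy. v i * M i l * W (Suc m) l j)"
      by (rule sum.swap)
    also have "\<dots> = (\<Sum>l<d (Suc m). (\<Sum>i<?dy. v i * M i l) * W (Suc m) l j)"
      by (simp add: sum_distrib_right)
    also have "\<dots> = 0" using v(3) by simp
    finally show "(\<Sum>i<?dy. v i * M' i j) = 0" .
  qed
  have MN0: "mmul (d (Suc m)) M (\<lambda>a b. n a * (if b = c then 1 else 0)) = (\<lambda>i j. 0)" for c
    by (rule mmul_null_right[OF Suc.prems(2) n(3)])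
  have IHhyp: "\<forall>V\<in>params d H. (\<forall>j>m. V j = W j) \<longrightarrow> pnorm d H V W < \<delta>/2 \<longrightarrow>
        mmul (d m) M' (seg d V 1 m) = mmul (d m) M' (seg d W 1 m) \<longrightarrow>
        (\<forall>i<?dy. \<forall>c<d m. (\<Sum>b<d 0. R i b * seg d V 1 m c b) = 0)"
  proof (intro ballI impI allI)
    fix V i c assume V: "V \<in> params d H" and Vj: "\<forall>j>m. V j = W j" and Vn: "pnorm d H V W < \<delta>/2"
      and Vc: "mmul (d m) M' (seg d V 1 m) = mmul (d m) M' (seg d W 1 m)" and i: "i < ?dy" and c: "c < d m"
    define N where "N = (\<lambda>a b. n a * (if b = c then 1 else 0 :: real))"
    have Nm: "N \<in> mats (d (Suc m)) (d m)" using n(2) c by (auto simp: mats_def N_def)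
    define f where "f = frob_norm (d (Suc m)) (d m) N"
    define t where "t = \<delta> / (2 * (f + 1))"
    have t0: "t > 0" and tN: "t * f < \<delta>/2"
      using small_t[OF Suc.prems(4), of f] by (simp_all add: t_def f_def)
    define X where "X = madd (W (Suc m)) (\<lambda>a b. t * N a b)"
    have Xm: "X \<in> mats (d (Suc m)) (d (Suc m - 1))" using WSm Nm by (auto simp: mats_def X_def madd_def)
    have VSm: "V (Suc m) = W (Suc m)" using Vj by simp
    define Vt where "Vt = V(Suc m := X)"
    have Vt: "Vt \<in> params d H" unfolding Vt_def by (rule params_upd[OF V m1(2) Xm])
    have Vtj: "\<forall>j>Suc m. Vt j = W j" using Vj by (simp add: Vt_def)
    have pn: "pnorm d H Vt W < \<delta>"
    proof -
      have "pnorm d H Vt W \<le> pnorm d H Vt V + pnorm d H V W" by (rule pnorm_tri)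
      also have "pnorm d H Vt V = frob_norm (d (Suc m)) (d (Suc m - 1)) (msub X (V (Suc m)))"
        unfolding Vt_def by (rule pnorm_upd[OF m1(2)])
      also have "msub X (V (Suc m)) = (\<lambda>a b. t * N a b)" by (simp add: X_def VSm msub_def madd_def)
      also have "frob_norm (d (Suc m)) (d (Suc m - 1)) (\<lambda>a b. t * N a b) = t * f"
        using t0 by (simp add: frob_scale f_def)
      finally show ?thesis using tN Vn by linarith
    qed
    have segVt_lo: "seg d Vt 1 m = seg d V 1 m" unfolding Vt_def by (rule seg_cong) auto
    have segVt0: "seg d Vt 1 (Suc m) = mmul (d m) X (seg d V 1 m)"
      using seg_Suc1[of d Vt m] segVt_lo by (simp add: Vt_def)
    have segVt: "seg d Vt 1 (Suc m) = (\<lambda>a b. mmul (d m) (W (Suc m)) (seg d V 1 m) a b + t * (n a * seg d V 1 m c b))"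
      unfolding segVt0 X_def mmul_madd_left N_def mmul_colvec[OF c] ..
    have segV: "seg d V 1 (Suc m) = mmul (d m) (W (Suc m)) (seg d V 1 m)"
      using seg_Suc1[of d V m] VSm by simp
    have cW: "mmul (d (Suc m)) M (seg d W 1 (Suc m)) = mmul (d m) M' (seg d W 1 m)"
      using seg_Suc1[of d W m] by (simp add: M'_def mmul_assoc)
    have cV: "mmul (d (Suc m)) M (seg d V 1 (Suc m)) = mmul (d (Suc m)) M (seg d W 1 (Suc m))"
      unfolding segV cW using Vc by (simp add: M'_def mmul_assoc)
    have MX: "mmul (d (Suc m)) M X = M'"
      unfolding X_def mmul_madd_right N_def MN0 by (simp add: M'_def)
    have cVt: "mmul (d (Suc m)) M (seg d Vt 1 (Suc m)) = mmul (d (Suc m)) M (seg d W 1 (Suc m))"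
      unfolding segVt0 cW mmul_assoc[symmetric] MX using Vc .
    have h1: "(\<Sum>b<d 0. R i b * seg d Vt 1 (Suc m) r0 b) = 0"
      using Suc.prems(5) Vt Vtj pn cVt i r0(1) by blast
    have h0: "(\<Sum>b<d 0. R i b * seg d V 1 (Suc m) r0 b) = 0"
    proof -
      have "\<forall>j>Suc m. V j = W j" using Vj by simp
      moreover have "pnorm d H V W < \<delta>" using Vn Suc.prems(4) by linarith
      ultimately show ?thesis using Suc.prems(5) V cV i r0(1) by blast
    qed
    have "0 = (\<Sum>b<d 0. R i b * seg d Vt 1 (Suc m) r0 b)" using h1 by simp
    also have "\<dots> = (\<Sum>b<d 0. R i b * seg d V 1 (Suc m) r0 b) + t * n r0 * (\<Sum>b<d 0. R i b * seg d V 1 m c b)"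
      unfolding segVt segV by (simp add: algebra_simps sum.distrib sum_distrib_left)
    finally have "t * n r0 * (\<Sum>b<d 0. R i b * seg d V 1 m c b) = 0" using h0 by simp
    then show "(\<Sum>b<d 0. R i b * seg d V 1 m c b) = 0" using t0 r0(2) by simp
  qed
  have "m \<le> H" using Suc.prems(1) by simp
  moreover have "\<exists>v. (\<exists>i<?dy. v i \<noteq> 0) \<and> (\<forall>j<d m. (\<Sum>i<?dy. v i * M' i j) = 0)"
    using v M'v by blast
  moreover have "\<delta> / 2 > 0" using Suc.prems(4) by simp
  ultimately show ?case using Suc.IH[OF _ M'm _ _ IHhyp] by blast
qed

lemma seg_full: "lay d V \<Longrightarrow> m \<le> H + 1 \<Longrightarrow>
   seg d V 1 (H + 1) = mmul (d m) (seg d V (m + 1) (H + 1 - m)) (seg d V 1 m)"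
proof -
  assume L: "lay d V" and m: "m \<le> H + 1"
  have "seg d V 1 (m + (H + 1 - m)) = mmul (d (1 + m - 1)) (seg d V (1 + m) (H + 1 - m)) (seg d V 1 m)"
    by (rule seg_split[OF L]) simp
  moreover have "m + (H + 1 - m) = H + 1" using m by simp
  ultimately show ?thesis by (simp add: add.commute)
qed

definition FC :: "(nat \<Rightarrow> nat) \<Rightarrow> nat \<Rightarrow> (nat \<Rightarrow> mat) \<Rightarrow> mat \<Rightarrow> real \<Rightarrow> bool" where
  "FC d H W R \<delta> \<longleftrightarrow> (\<forall>V\<in>params d H. pnorm d H V W < \<delta> \<longrightarrow> seg d V 1 (H+1) = seg d W 1 (H+1) \<longrightarrow>
      (\<forall>k\<in>{1..H+1}. \<forall>p<d k. \<forall>q<d (k - 1). frob_inner (d (H+1)) (d 0) R (Kmat d H V k p q) = 0))"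

lemma claim_dy:
  assumes W: "W \<in> params d H" and wid: "\<forall>j\<in>{1..H}. d (H+1) \<le> d j" and \<delta>: "\<delta> > 0"
    and fc: "FC d H W R \<delta>"
  shows "\<forall>i<d (H+1). \<forall>b<d 0. R i b = 0"
proof -
  let ?dy = "d (H+1)"
  note L = params_lay[OF W]
  define Pk where "Pk = (\<lambda>k. 1 \<le> k \<and> k \<le> H+1 \<and> full_row_rank ?dy (d k) (seg d W (k+1) (H+1-k)))"
  have PH: "Pk (H+1)" by (simp add: Pk_def ident_frr)
  define k where "k = (LEAST k. Pk k)"
  have Pkk: "Pk k" unfolding k_def by (rule LeastI[of Pk, OF PH])
  have kmin: "\<not> Pk j" if "j < k" for j using not_less_Least[of j Pk] that k_def by blast
  have k1: "1 \<le> k" "k \<le> H+1" and frk: "full_row_rank ?dy (d k) (seg d W (k+1) (H+1-k))"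
    using Pkk by (auto simp: Pk_def)
  have rowfact: "\<forall>q<d (k - 1). \<forall>a<?dy. (\<Sum>b<d 0. R a b * seg d V 1 (k - 1) q b) = 0"
    if V: "V \<in> params d H" "pnorm d H V W < \<delta>" "seg d V 1 (H+1) = seg d W 1 (H+1)"
      and FV: "seg d V (k+1) (H+1-k) = seg d W (k+1) (H+1-k)" for V
  proof (intro allI impI)
    fix q a assume q: "q < d (k - 1)" and a: "a < ?dy"
    have "\<forall>p<d k. frob_inner ?dy (d 0) R (Kmat d H V k p q) = 0"
      using fc V k1 q unfolding FC_def by auto
    then have "\<forall>p<d k. (\<Sum>a<?dy. (\<Sum>b<d 0. R a b * seg d V 1 (k - 1) q b) * seg d W (k + 1) (H + 1 - k) a p) = 0"
      by (simp only: Kmat_rows FV)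
    then show "(\<Sum>b<d 0. R a b * seg d V 1 (k - 1) q b) = 0"
      using frk[unfolded full_row_rank_def, rule_format, of "\<lambda>a. \<Sum>b<d 0. R a b * seg d V 1 (k - 1) q b"] a by blast
  qed
  show ?thesis
  proof (cases "k = 1")
    case True
    have "\<forall>q<d 0. \<forall>a<?dy. (\<Sum>b<d 0. R a b * seg d W 1 0 q b) = 0"
      using rowfact[OF W] \<delta> True by simp
    then show ?thesis by (simp add: sum_ident_right)
  next
    case False
    define m where "m = k - 1"
    have m: "1 \<le> m" "m \<le> H" "k = m + 1" using k1 False by (auto simp: m_def)
    define M where "M = seg d W (m+1) (H+1-m)"
    have Mm: "M \<in> mats ?dy (d m)"
      using seg_mats[OF L, of "m+1" "H+1-m"] m by (simp add: M_def)
    have "\<not> Pk m" using kmin m by simp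
    then have "\<not> full_row_rank ?dy (d m) M" using m by (simp add: Pk_def M_def)
    then have v: "\<exists>v. (\<exists>i<?dy. v i \<noteq> 0) \<and> (\<forall>j<d m. (\<Sum>i<?dy. v i * M i j) = 0)"
      unfolding full_row_rank_def by blast
    have hyp: "\<forall>V\<in>params d H. (\<forall>j>m. V j = W j) \<longrightarrow> pnorm d H V W < \<delta> \<longrightarrow>
        mmul (d m) M (seg d V 1 m) = mmul (d m) M (seg d W 1 m) \<longrightarrow>
        (\<forall>i<?dy. \<forall>c<d m. (\<Sum>b<d 0. R i b * seg d V 1 m c b) = 0)"
    proof (intro ballI impI allI)
      fix V i c assume V: "V \<in> params d H" and Vj: "\<forall>j>m. V j = W j" and Vn: "pnorm d H V W < \<delta>"
        and Vc: "mmul (d m) M (seg d V 1 m) = mmul (d m) M (seg d W 1 m)" and i: "i < ?dy" and c: "c < d m"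
      have FVm: "seg d V (m+1) (H+1-m) = M" unfolding M_def by (rule seg_cong) (use Vj in auto)
      have mH: "m \<le> H + 1" using m by simp
      have P: "seg d V 1 (H+1) = seg d W 1 (H+1)"
        unfolding seg_full[OF params_lay[OF V] mH] seg_full[OF L mH, folded M_def] FVm using Vc .
      have FVk: "seg d V (k+1) (H+1-k) = seg d W (k+1) (H+1-k)" by (rule seg_cong) (use Vj m in auto)
      show "(\<Sum>b<d 0. R i b * seg d V 1 m c b) = 0"
        using rowfact[OF V Vn P FVk, folded m_def] i c by blast
    qed
    show ?thesis by (rule low_chain[OF W wid m(2) Mm v \<delta> hyp])
  qed
qed

lemma seg_top: "lay d V \<Longrightarrow> n \<le> H \<Longrightarrow>
  seg d V (Suc n) (H + 1 - n) = mmul (d (Suc n)) (seg d V (Suc (Suc n)) (H + 1 - Suc n)) (V (Suc n))"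
proof -
  assume L: "lay d V" and n: "n \<le> H"
  have s: "seg d V (Suc n) (1 + (H + 1 - Suc n)) = mmul (d (Suc n + 1 - 1)) (seg d V (Suc n + 1) (H + 1 - Suc n)) (seg d V (Suc n) 1)"
    by (rule seg_split[OF L]) simp
  have a1: "Suc n + 1 - 1 = Suc n" "Suc n + 1 = Suc (Suc n)" by simp_all
  have a3: "1 + (H + 1 - Suc n) = H + 1 - n" using n by simp
  have a4: "Suc (Suc n) - 1 = Suc n" by simp
  show ?thesis using s unfolding a1 a3 a4 seg_one[OF L] .
qed

definition Qup :: "(nat \<Rightarrow> nat) \<Rightarrow> nat \<Rightarrow> (nat \<Rightarrow> mat) \<Rightarrow> mat \<Rightarrow> nat \<Rightarrow> bool" where
  "Qup d H W R m \<longleftrightarrow> (\<forall>M \<delta>. M \<in> mats (d m) (d 0) \<longrightarrow>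
    (\<exists>u. (\<exists>b<d 0. u b \<noteq> 0) \<and> (\<forall>i<d m. (\<Sum>b<d 0. M i b * u b) = 0)) \<longrightarrow> \<delta> > 0 \<longrightarrow>
    (\<forall>V\<in>params d H. (\<forall>j\<le>m. V j = W j) \<longrightarrow> pnorm d H V W < \<delta> \<longrightarrow>
        mmul (d m) (seg d V (Suc m) (H + 1 - m)) M = mmul (d m) (seg d W (Suc m) (H + 1 - m)) M \<longrightarrow>
        (\<forall>q<d m. \<forall>b<d 0. (\<Sum>a<d (H+1). seg d V (Suc m) (H + 1 - m) a q * R a b) = 0)) \<longrightarrow>
    (\<forall>a<d (H+1). \<forall>b<d 0. R a b = 0))"

lemma up_chain:
  fixes d :: "nat \<Rightarrow> nat" and W :: "nat \<Rightarrow> mat"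
  assumes W: "W \<in> params d H" and wid: "\<forall>j\<in>{1..H}. d 0 \<le> d j" and m: "m \<le> H + 1"
  shows "Qup d H W R m"
  using m
proof (induction m rule: inc_induct)
  case base
  show ?case unfolding Qup_def
  proof (intro allI impI, goal_cases)
    case (1 M \<delta>)
    note \<delta> = 1(3) and hyp = 1(4)
    have "\<forall>q<d (H+1). \<forall>b<d 0. (\<Sum>a<d (H+1). seg d W (Suc (H+1)) (H + 1 - (H+1)) a q * R a b) = 0"
      using hyp W \<delta> by simp
    then show ?case using 1(5,6) by (simp add: sum_ident_left)
  qed
next
  case (step n)
  let ?dx = "d 0" and ?dy = "d (H+1)"
  note L = params_lay[OF W]
  have nH: "n \<le> H" using step.hyps by simp
  have n1: "Suc n \<in> {1..H+1}" using nH by simp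
  have wdn: "?dx \<le> d n" using wid nH by (cases n) auto
  have WSn: "W (Suc n) \<in> mats (d (Suc n)) (d n)" using L unfolding lay_def by (metis diff_Suc_1)
  show ?case unfolding Qup_def
  proof (intro allI impI)
    fix M and \<delta> :: real
    assume Mm: "M \<in> mats (d n) ?dx" and uex: "\<exists>u. (\<exists>b<?dx. u b \<noteq> 0) \<and> (\<forall>i<d n. (\<Sum>b<?dx. M i b * u b) = 0)"
      and \<delta>: "\<delta> > 0"
      and hyp: "\<forall>V\<in>params d H. (\<forall>j\<le>n. V j = W j) \<longrightarrow> pnorm d H V W < \<delta> \<longrightarrow>
        mmul (d n) (seg d V (Suc n) (H + 1 - n)) M = mmul (d n) (seg d W (Suc n) (H + 1 - n)) M \<longrightarrow>
        (\<forall>q<d n. \<forall>b<?dx. (\<Sum>a<?dy. seg d V (Suc n) (H + 1 - n) a q * R a b) = 0)"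
    fix a b assume ab: "a < ?dy" "b < ?dx"
    obtain u b0 where u: "b0 < ?dx" "u b0 \<noteq> 0" "\<forall>i<d n. (\<Sum>b<?dx. M i b * u b) = 0" using uex by blast
    obtain nn where nn: "\<exists>j<d n. nn j \<noteq> 0" "\<forall>j. d n \<le> j \<longrightarrow> nn j = 0"
        "\<forall>i<?dx. (\<Sum>j<d n. M j i * nn j) = 0"
      using right_null[of ?dx "d n" b0 u "\<lambda>i j. M j i"] u wdn by (auto simp: mult.commute)
    obtain r0 where r0: "r0 < d n" "nn r0 \<noteq> 0" using nn(1) by blast
    define M' where "M' = mmul (d n) (W (Suc n)) M"
    have M'm: "M' \<in> mats (d (Suc n)) ?dx" using Mm WSn by (simp add: M'_def mmul_mats)
    have M'u: "\<forall>i<d (Suc n). (\<Sum>b<?dx. M' i b * u b) = 0"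
    proof (intro allI impI)
      fix i assume "i < d (Suc n)"
      have "(\<Sum>b<?dx. M' i b * u b) = (\<Sum>b<?dx. \<Sum>l<d n. W (Suc n) i l * M l b * u b)"
        by (simp add: M'_def mmul_def sum_distrib_right sum_distrib_left mult_ac)
      also have "\<dots> = (\<Sum>l<d n. \<Sum>b<?dx. W (Suc n) i l * M l b * u b)"
        by (rule sum.swap)
      also have "\<dots> = (\<Sum>l<d n. W (Suc n) i l * (\<Sum>b<?dx. M l b * u b))"
        by (simp add: sum_distrib_left mult_ac)
      also have "\<dots> = 0" using u(3) by simp
      finally show "(\<Sum>b<?dx. M' i b * u b) = 0" .
    qed
    have NM0: "mmul (d n) (\<lambda>a b. (if a = q then 1 else 0) * nn b) M = (\<lambda>i j. 0)" for q
      by (rule mmul_null_left[OF Mm nn(3)])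
    have IHhyp: "\<forall>V\<in>params d H. (\<forall>j\<le>Suc n. V j = W j) \<longrightarrow> pnorm d H V W < \<delta>/2 \<longrightarrow>
        mmul (d (Suc n)) (seg d V (Suc (Suc n)) (H + 1 - Suc n)) M' = mmul (d (Suc n)) (seg d W (Suc (Suc n)) (H + 1 - Suc n)) M' \<longrightarrow>
        (\<forall>q<d (Suc n). \<forall>b<?dx. (\<Sum>a<?dy. seg d V (Suc (Suc n)) (H + 1 - Suc n) a q * R a b) = 0)"
    proof (intro ballI impI allI)
      fix V q b assume V: "V \<in> params d H" and Vj: "\<forall>j\<le>Suc n. V j = W j" and Vn: "pnorm d H V W < \<delta>/2"
        and Vc: "mmul (d (Suc n)) (seg d V (Suc (Suc n)) (H + 1 - Suc n)) M' = mmul (d (Suc n)) (seg d W (Suc (Suc n)) (H + 1 - Suc n)) M'"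
        and q: "q < d (Suc n)" and b: "b < ?dx"
      define G where "G = seg d V (Suc (Suc n)) (H + 1 - Suc n)"
      define GW where "GW = seg d W (Suc (Suc n)) (H + 1 - Suc n)"
      define N where "N = (\<lambda>a c. (if a = q then 1 else 0) * nn c :: real)"
      have Nm: "N \<in> mats (d (Suc n)) (d n)" using nn(2) q by (auto simp: mats_def N_def)
      define f where "f = frob_norm (d (Suc n)) (d n) N"
      define t where "t = \<delta> / (2 * (f + 1))"
      have t0: "t > 0" and tN: "t * f < \<delta>/2"
        using small_t[OF \<delta>, of f] by (simp_all add: t_def f_def)
      define X where "X = madd (W (Suc n)) (\<lambda>a c. t * N a c)"
      have Xm: "X \<in> mats (d (Suc n)) (d (Suc n - 1))" using WSn Nm by (auto simp: mats_def X_def madd_def)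
      have VSn: "V (Suc n) = W (Suc n)" using Vj by simp
      define Vt where "Vt = V(Suc n := X)"
      have Vt: "Vt \<in> params d H" unfolding Vt_def by (rule params_upd[OF V n1 Xm])
      have Vtj: "\<forall>j\<le>n. Vt j = W j" using Vj by (simp add: Vt_def)
      have pn: "pnorm d H Vt W < \<delta>"
      proof -
        have "pnorm d H Vt W \<le> pnorm d H Vt V + pnorm d H V W" by (rule pnorm_tri)
        also have "pnorm d H Vt V = frob_norm (d (Suc n)) (d (Suc n - 1)) (msub X (V (Suc n)))"
          unfolding Vt_def by (rule pnorm_upd[OF n1])
        also have "msub X (V (Suc n)) = (\<lambda>a c. t * N a c)" by (simp add: X_def VSn msub_def madd_def)
        also have "frob_norm (d (Suc n)) (d (Suc n - 1)) (\<lambda>a c. t * N a c) = t * f"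
          using t0 by (simp add: frob_scale f_def)
        finally show ?thesis using tN Vn by linarith
      qed
      have GVt: "seg d Vt (Suc (Suc n)) (H + 1 - Suc n) = G" unfolding G_def Vt_def by (rule seg_cong) auto
      have FVt: "seg d Vt (Suc n) (H + 1 - n) = mmul (d (Suc n)) G X"
        using seg_top[OF params_lay[OF Vt] nH] GVt by (simp add: Vt_def)
      have FV: "seg d V (Suc n) (H + 1 - n) = mmul (d (Suc n)) G (W (Suc n))"
        using seg_top[OF params_lay[OF V] nH] VSn by (simp add: G_def)
      have FW: "seg d W (Suc n) (H + 1 - n) = mmul (d (Suc n)) GW (W (Suc n))"
        using seg_top[OF L nH] by (simp add: GW_def)
      have cW: "mmul (d n) (seg d W (Suc n) (H + 1 - n)) M = mmul (d (Suc n)) GW M'"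
        unfolding FW M'_def by (simp add: mmul_assoc)
      have XM: "mmul (d n) X M = M'"
        unfolding X_def mmul_madd_left N_def NM0 by (simp add: M'_def)
      have cVt: "mmul (d n) (seg d Vt (Suc n) (H + 1 - n)) M = mmul (d n) (seg d W (Suc n) (H + 1 - n)) M"
        unfolding FVt cW mmul_assoc XM using Vc by (simp add: G_def GW_def)
      have cV: "mmul (d n) (seg d V (Suc n) (H + 1 - n)) M = mmul (d n) (seg d W (Suc n) (H + 1 - n)) M"
        unfolding FV cW mmul_assoc using Vc by (simp add: G_def GW_def M'_def)
      have h1: "(\<Sum>a<?dy. seg d Vt (Suc n) (H + 1 - n) a r0 * R a b) = 0"
        using hyp Vt Vtj pn cVt b r0(1) by blast
      have h0: "(\<Sum>a<?dy. seg d V (Suc n) (H + 1 - n) a r0 * R a b) = 0"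
      proof -
        have "\<forall>j\<le>n. V j = W j" using Vj by simp
        moreover have "pnorm d H V W < \<delta>" using Vn \<delta> by linarith
        ultimately show ?thesis using hyp V cV b r0(1) by blast
      qed
      have FVt2: "seg d Vt (Suc n) (H + 1 - n) = (\<lambda>a c. seg d V (Suc n) (H + 1 - n) a c + t * (G a q * nn c))"
        unfolding FVt FV X_def mmul_madd_right N_def mmul_rowvec[OF q] ..
      have "0 = (\<Sum>a<?dy. seg d Vt (Suc n) (H + 1 - n) a r0 * R a b)" using h1 by simp
      also have "\<dots> = (\<Sum>a<?dy. seg d V (Suc n) (H + 1 - n) a r0 * R a b) + t * nn r0 * (\<Sum>a<?dy. G a q * R a b)"
        unfolding FVt2 by (simp add: algebra_simps sum.distrib sum_distrib_left)
      finally have "t * nn r0 * (\<Sum>a<?dy. G a q * R a b) = 0" using h0 by simp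
      then show "(\<Sum>a<?dy. seg d V (Suc (Suc n)) (H + 1 - Suc n) a q * R a b) = 0"
        using t0 r0(2) by (simp add: G_def)
    qed
    have "\<exists>u. (\<exists>b<?dx. u b \<noteq> 0) \<and> (\<forall>i<d (Suc n). (\<Sum>b<?dx. M' i b * u b) = 0)"
      using u M'u by blast
    moreover have "\<delta> / 2 > 0" using \<delta> by simp
    ultimately have "\<forall>a<?dy. \<forall>b<?dx. R a b = 0"
      using step.IH M'm IHhyp unfolding Qup_def by blast
    then show "R a b = 0" using ab by blast
  qed
qed

lemma claim_dx:
  assumes W: "W \<in> params d H" and wid: "\<forall>j\<in>{1..H}. d 0 \<le> d j" and \<delta>: "\<delta> > 0"
    and fc: "FC d H W R \<delta>"
  shows "\<forall>a<d (H+1). \<forall>b<d 0. R a b = 0"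
proof -
  let ?dx = "d 0" and ?dy = "d (H+1)"
  note L = params_lay[OF W]
  define Pk where "Pk = (\<lambda>k. 1 \<le> k \<and> k \<le> H+1 \<and> full_col_rank (d (k - 1)) ?dx (seg d W 1 (k - 1)))"
  have P1: "Pk 1" by (simp add: Pk_def ident_fcr)
  have bnd: "\<And>y. Pk y \<Longrightarrow> y \<le> H+1" by (simp add: Pk_def)
  define k where "k = (GREATEST k. Pk k)"
  have Pkk: "Pk k" unfolding k_def by (rule GreatestI_nat[where P=Pk, OF P1 bnd])
  have kmax: "\<not> Pk j" if "j > k" for j
  proof
    assume "Pk j"
    then have "j \<le> k" unfolding k_def by (rule Greatest_le_nat[where P=Pk, OF _ bnd])
    then show False using that by simp
  qed
  have k1: "1 \<le> k" "k \<le> H+1" and fck: "full_col_rank (d (k - 1)) ?dx (seg d W 1 (k - 1))"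
    using Pkk by (auto simp: Pk_def)
  have colfact: "\<forall>p<d k. \<forall>b<?dx. (\<Sum>a<?dy. seg d V (k+1) (H+1-k) a p * R a b) = 0"
    if V: "V \<in> params d H" "pnorm d H V W < \<delta>" "seg d V 1 (H+1) = seg d W 1 (H+1)"
      and BV: "seg d V 1 (k - 1) = seg d W 1 (k - 1)" for V
  proof (intro allI impI)
    fix p b assume p: "p < d k" and b: "b < ?dx"
    have "\<forall>q<d (k - 1). frob_inner ?dy ?dx R (Kmat d H V k p q) = 0"
      using fc V k1 p unfolding FC_def by auto
    then have "\<forall>q<d (k - 1). (\<Sum>b<?dx. seg d W 1 (k - 1) q b * (\<Sum>a<?dy. seg d V (k + 1) (H + 1 - k) a p * R a b)) = 0"
      by (simp only: Kmat_cols BV)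
    then show "(\<Sum>a<?dy. seg d V (k+1) (H+1-k) a p * R a b) = 0"
      using fck[unfolded full_col_rank_def, rule_format, of "\<lambda>b. \<Sum>a<?dy. seg d V (k+1) (H+1-k) a p * R a b"] b
      by blast
  qed
  show ?thesis
  proof (cases "k = H+1")
    case True
    have "\<forall>p<d k. \<forall>b<?dx. (\<Sum>a<?dy. seg d W (k+1) (H+1-k) a p * R a b) = 0"
      using colfact[OF W] \<delta> by simp
    then have "\<forall>p<?dy. \<forall>b<?dx. (\<Sum>a<?dy. ident ?dy a p * R a b) = 0"
      using True by simp
    then show ?thesis by (simp add: sum_ident_left)
  next
    case False
    have m: "1 \<le> k" "k \<le> H" using k1 False by auto
    define M where "M = seg d W 1 k"
    have Mm: "M \<in> mats (d k) ?dx" using seg_mats[OF L, of 1 k] by (simp add: M_def)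
    have "\<not> Pk (k+1)" using kmax by simp
    then have "\<not> full_col_rank (d k) ?dx M" using m by (simp add: Pk_def M_def)
    then have u: "\<exists>u. (\<exists>b<?dx. u b \<noteq> 0) \<and> (\<forall>i<d k. (\<Sum>b<?dx. M i b * u b) = 0)"
      unfolding full_col_rank_def by blast
    have Q: "Qup d H W R k" by (rule up_chain[OF W wid]) (use m in simp)
    have hyp: "\<forall>V\<in>params d H. (\<forall>j\<le>k. V j = W j) \<longrightarrow> pnorm d H V W < \<delta> \<longrightarrow>
        mmul (d k) (seg d V (Suc k) (H + 1 - k)) M = mmul (d k) (seg d W (Suc k) (H + 1 - k)) M \<longrightarrow>
        (\<forall>q<d k. \<forall>b<?dx. (\<Sum>a<?dy. seg d V (Suc k) (H + 1 - k) a q * R a b) = 0)"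
    proof (intro ballI impI)
      fix V assume V: "V \<in> params d H" and Vj: "\<forall>j\<le>k. V j = W j" and Vn: "pnorm d H V W < \<delta>"
        and Vc: "mmul (d k) (seg d V (Suc k) (H + 1 - k)) M = mmul (d k) (seg d W (Suc k) (H + 1 - k)) M"
      have BVm: "seg d V 1 k = M" unfolding M_def by (rule seg_cong) (use Vj in auto)
      have mH: "k \<le> H+1" using m by simp
      have P: "seg d V 1 (H+1) = seg d W 1 (H+1)"
        unfolding seg_full[OF params_lay[OF V] mH] seg_full[OF L mH, folded M_def] BVm using Vc by simp
      have BVk: "seg d V 1 (k - 1) = seg d W 1 (k - 1)" by (rule seg_cong) (use Vj in auto)
      show "\<forall>q<d k. \<forall>b<?dx. (\<Sum>a<?dy. seg d V (Suc k) (H + 1 - k) a q * R a b) = 0"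
        using colfact[OF V Vn P BVk] by simp
    qed
    show ?thesis using Q Mm u \<delta> hyp unfolding Qup_def by blast
  qed
qed

lemma claim_all:
  assumes W: "W \<in> params d H" and wid: "\<forall>j\<in>{1..H}. min (d 0) (d (H+1)) \<le> d j" and \<delta>: "\<delta> > 0"
    and fc: "FC d H W R \<delta>"
  shows "\<forall>a<d (H+1). \<forall>b<d 0. R a b = 0"
proof (cases "d (H+1) \<le> d 0")
  case True
  then have "min (d 0) (d (H+1)) = d (H+1)" by simp
  then have "\<forall>j\<in>{1..H}. d (H+1) \<le> d j" using wid by metis
  then show ?thesis using claim_dy[OF W _ \<delta> fc] by blast
next
  case False
  then have "min (d 0) (d (H+1)) = d 0" by simp
  then have "\<forall>j\<in>{1..H}. d 0 \<le> d j" using wid by metis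
  then show ?thesis using claim_dx[OF W _ \<delta> fc] by blast
qed

lemma zmat_eq: "R \<in> mats m n \<Longrightarrow> \<forall>a<m. \<forall>b<n. R a b = 0 \<Longrightarrow> R = zmat"
proof (intro ext)
  fix i j assume R: "R \<in> mats m n" and z: "\<forall>a<m. \<forall>b<n. R a b = 0"
  show "R i j = zmat i j"
  proof (cases "i < m \<and> j < n")
    case True then show ?thesis using z by (simp add: zmat_def)
  next
    case False then have "m \<le> i \<or> n \<le> j" by auto
    then show ?thesis using matsD[OF R] by (simp add: zmat_def)
  qed
qed

lemma fc_from_ext:
  assumes W: "W \<in> params d H" and s: "s = 1 \<or> s = -1" and \<epsilon>: "\<epsilon> > 0"
    and ext: "\<forall>V\<in>params d H. pnorm d H V W < \<epsilon> \<longrightarrow> s * l0 (seg d W 1 (H + 1)) \<le> s * l0 (seg d V 1 (H + 1))"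
    and grad: "mat_has_grad (d (H + 1)) (d 0) l0 R (seg d W 1 (H + 1))"
  shows "FC d H W R (\<epsilon> / 2)"
  unfolding FC_def
proof (intro ballI impI allI)
  fix V k p q assume V: "V \<in> params d H" and Vn: "pnorm d H V W < \<epsilon> / 2"
    and P: "seg d V 1 (H+1) = seg d W 1 (H+1)" and k: "k \<in> {1..H+1}" and p: "p < d k" and q: "q < d (k - 1)"
  have extV: "\<exists>\<epsilon>'>0. \<forall>V'\<in>params d H. pnorm d H V' V < \<epsilon>' \<longrightarrow> s * l0 (seg d V 1 (H + 1)) \<le> s * l0 (seg d V' 1 (H + 1))"
  proof (intro exI[of _ "\<epsilon> / 2"] conjI ballI impI)
    show "\<epsilon> / 2 > 0" using \<epsilon> by simp
    fix V' assume V': "V' \<in> params d H" and n': "pnorm d H V' V < \<epsilon> / 2"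
    have "pnorm d H V' W \<le> pnorm d H V' V + pnorm d H V W" by (rule pnorm_tri)
    then have "pnorm d H V' W < \<epsilon>" using n' Vn by linarith
    then show "s * l0 (seg d V 1 (H + 1)) \<le> s * l0 (seg d V' 1 (H + 1))" using ext V' P by simp
  qed
  show "frob_inner (d (H+1)) (d 0) R (Kmat d H V k p q) = 0"
    by (rule extr_grad[OF V s extV _ k p q]) (use grad P in simp)
qed

lemma mats_mono: "A \<in> mats m n \<Longrightarrow> m \<le> m' \<Longrightarrow> n \<le> n' \<Longrightarrow> A \<in> mats m' n'"
  by (auto simp: mats_def)

lemma seg_lip:
  assumes W: "W \<in> params d H"
  shows "a \<le> H + 1 \<Longrightarrow> \<exists>C\<ge>0. \<forall>V\<in>params d H. pnorm d H V W \<le> 1 \<longrightarrow>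
     frob_norm (d a) (d 0) (msub (seg d V 1 a) (seg d W 1 a)) \<le> C * pnorm d H V W"
proof (induction a)
  case 0
  show ?case by (intro exI[of _ 0]) (simp add: msub_def frob_norm_def frob_inner_def)
next
  case (Suc a)
  obtain C where C: "C \<ge> 0" "\<forall>V\<in>params d H. pnorm d H V W \<le> 1 \<longrightarrow>
     frob_norm (d a) (d 0) (msub (seg d V 1 a) (seg d W 1 a)) \<le> C * pnorm d H V W"
    using Suc by auto
  define fW where "fW = frob_norm (d (Suc a)) (d a) (W (Suc a))"
  define fS where "fS = frob_norm (d a) (d 0) (seg d W 1 a)"
  have ka: "Suc a \<in> {1..H+1}" using Suc.prems by simp
  show ?case
  proof (intro exI[of _ "(fW + 1) * C + fS"] conjI ballI impI)
    show "0 \<le> (fW + 1) * C + fS" using C by (simp add: fW_def fS_def)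
    fix V assume V: "V \<in> params d H" and Vn: "pnorm d H V W \<le> 1"
    let ?\<rho> = "pnorm d H V W"
    let ?D = "msub (V (Suc a)) (W (Suc a))"
    have dl: "frob_norm (d (Suc a)) (d a) ?D \<le> ?\<rho>" using layer_le_pnorm[OF ka, of d V W] by simp
    have fV: "frob_norm (d (Suc a)) (d a) (V (Suc a)) \<le> fW + 1"
    proof -
      have "V (Suc a) = (\<lambda>i j. W (Suc a) i j + ?D i j)" by (simp add: msub_def)
      then have "frob_norm (d (Suc a)) (d a) (V (Suc a)) \<le> fW + frob_norm (d (Suc a)) (d a) ?D"
        unfolding fW_def by (metis frob_tri)
      then show ?thesis using dl Vn by linarith
    qed
    have eq: "msub (seg d V 1 (Suc a)) (seg d W 1 (Suc a)) =
       (\<lambda>i j. mmul (d a) (V (Suc a)) (msub (seg d V 1 a) (seg d W 1 a)) i j + mmul (d a) ?D (seg d W 1 a) i j)"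
      by (simp add: msub_def mmul_def algebra_simps sum_subtractf)
    have "frob_norm (d (Suc a)) (d 0) (msub (seg d V 1 (Suc a)) (seg d W 1 (Suc a)))
       \<le> frob_norm (d (Suc a)) (d 0) (mmul (d a) (V (Suc a)) (msub (seg d V 1 a) (seg d W 1 a)))
        + frob_norm (d (Suc a)) (d 0) (mmul (d a) ?D (seg d W 1 a))"
      unfolding eq by (rule frob_tri)
    also have "\<dots> \<le> frob_norm (d (Suc a)) (d a) (V (Suc a)) * frob_norm (d a) (d 0) (msub (seg d V 1 a) (seg d W 1 a))
        + frob_norm (d (Suc a)) (d a) ?D * fS"
      unfolding fS_def by (intro add_mono frob_mmul)
    also have "\<dots> \<le> (fW + 1) * (C * ?\<rho>) + ?\<rho> * fS"
      using C(2) V Vn fV dl by (intro add_mono mult_mono) (auto simp: fS_def fW_def)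
    also have "\<dots> = ((fW + 1) * C + fS) * ?\<rho>" by (simp add: algebra_simps)
    finally show "frob_norm (d (Suc a)) (d 0) (msub (seg d V 1 (Suc a)) (seg d W 1 (Suc a))) \<le> ((fW + 1) * C + fS) * ?\<rho>" .
  qed
qed

lemma seg_cont:
  assumes W: "W \<in> params d H" and \<epsilon>: "\<epsilon> > 0"
  shows "\<exists>\<delta>>0. \<forall>V\<in>params d H. pnorm d H V W < \<delta> \<longrightarrow>
     frob_norm (d (H+1)) (d 0) (msub (seg d V 1 (H+1)) (seg d W 1 (H+1))) < \<epsilon>"
proof -
  obtain C where C: "C \<ge> 0" "\<forall>V\<in>params d H. pnorm d H V W \<le> 1 \<longrightarrow>
     frob_norm (d (H+1)) (d 0) (msub (seg d V 1 (H+1)) (seg d W 1 (H+1))) \<le> C * pnorm d H V W"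
    using seg_lip[OF W, of "H+1"] by auto
  show ?thesis
  proof (intro exI[of _ "min 1 (\<epsilon> / (C + 1))"] conjI ballI impI)
    show "min 1 (\<epsilon> / (C + 1)) > 0" using \<epsilon> C by simp
    fix V assume V: "V \<in> params d H" and Vn: "pnorm d H V W < min 1 (\<epsilon> / (C + 1))"
    have r1: "pnorm d H V W \<le> 1" using Vn by simp
    have r2: "pnorm d H V W * (C + 1) < \<epsilon>" using Vn C by (simp add: field_simps)
    have "C * pnorm d H V W \<le> pnorm d H V W * (C + 1)" by (simp add: algebra_simps)
    then show "frob_norm (d (H+1)) (d 0) (msub (seg d V 1 (H+1)) (seg d W 1 (H+1))) < \<epsilon>"
      using C(2) V r1 r2 by fastforce
  qed
qed

lemma surj_prod:
  assumes H1: "H \<ge> 1" and wid: "\<forall>j\<in>{1..H}. min (d 0) (d (H+1)) \<le> d j"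
    and X: "X \<in> mats (d (H+1)) (d 0)"
  shows "\<exists>V\<in>params d H. seg d V 1 (H+1) = X"
proof (cases "d 0 \<le> d (H+1)")
  case True
  define c where "c = d 0"
  have cw: "c \<le> d j" if "j \<le> H" for j
  proof (cases "j = 0")
    case True then show ?thesis by (simp add: c_def)
  next
    case False
    then have "min (d 0) (d (H+1)) \<le> d j" using wid that by simp
    then show ?thesis using \<open>d 0 \<le> d (H+1)\<close> by (simp add: c_def)
  qed
  define V where "V = (\<lambda>j. if j = H+1 then X else if 1 \<le> j \<and> j \<le> H then ident c else zmat)"
  have Vp: "V \<in> params d H"
    unfolding params_def
  proof (intro CollectI conjI ballI allI impI)
    fix j assume j: "j \<in> {1..H+1}"
    show "V j \<in> mats (d j) (d (j - 1))"
    proof (cases "j = H+1")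
      case True
      then show ?thesis using X cw[of H] by (auto simp: V_def c_def intro: mats_mono)
    next
      case False
      then have "1 \<le> j" "j \<le> H" using j by auto
      then show ?thesis using cw[of j] cw[of "j - 1"] False by (simp add: V_def ident_mats)
    qed
  next
    fix j :: nat assume "j \<notin> {1..H+1}"
    then show "V j = zmat" by (auto simp: V_def)
  qed
  have L: "lay d V" by (rule params_lay[OF Vp])
  have segI: "a \<le> H \<Longrightarrow> seg d V 1 a = ident c" for a
  proof (induction a)
    case 0 then show ?case by (simp add: c_def)
  next
    case (Suc a)
    have "seg d V 1 (Suc a) = mmul (d a) (ident c) (ident c)"
      using Suc by (simp add: V_def)
    also have "\<dots> = ident c" by (rule mmul_ident_left) (use cw Suc.prems in \<open>auto intro: ident_mats\<close>)
    finally show ?case .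
  qed
  have "seg d V 1 (H+1) = mmul (d H) X (ident c)"
    using seg_Suc1[of d V H] segI[of H] by (simp add: V_def)
  also have "\<dots> = X" by (rule mmul_ident_right) (use cw X in \<open>auto simp: c_def\<close>)
  finally show ?thesis using Vp by blast
next
  case False
  define c where "c = d (H+1)"
  have cw: "c \<le> d j" if "1 \<le> j" "j \<le> H + 1" for j
  proof (cases "j = H + 1")
    case True then show ?thesis by (simp add: c_def)
  next
    case False
    then have "min (d 0) (d (H+1)) \<le> d j" using wid that by simp
    then show ?thesis using \<open>\<not> d 0 \<le> d (H+1)\<close> by (simp add: c_def)
  qed
  define V where "V = (\<lambda>j. if j = 1 then X else if 2 \<le> j \<and> j \<le> H + 1 then ident c else zmat)"
  have Vp: "V \<in> params d H"
    unfolding params_def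
  proof (intro CollectI conjI ballI allI impI)
    fix j assume j: "j \<in> {1..H+1}"
    show "V j \<in> mats (d j) (d (j - 1))"
    proof (cases "j = 1")
      case True
      then show ?thesis using X cw[of 1] H1 by (auto simp: V_def c_def intro: mats_mono)
    next
      case False
      then have "2 \<le> j" "j \<le> H + 1" using j by auto
      then show ?thesis using cw[of j] cw[of "j - 1"] False by (simp add: V_def ident_mats)
    qed
  next
    fix j :: nat assume "j \<notin> {1..H+1}"
    then show "V j = zmat" by (auto simp: V_def)
  qed
  have L: "lay d V" by (rule params_lay[OF Vp])
  have segX: "1 \<le> a \<Longrightarrow> a \<le> H + 1 \<Longrightarrow> seg d V 1 a = X" for a
  proof (induction a)
    case 0 then show ?case by simp
  next
    case (Suc a)
    show ?case
    proof (cases "a = 0")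
      case True
      then show ?thesis using seg_one[OF L, of 1] by (simp add: V_def)
    next
      case False
      then have "seg d V 1 (Suc a) = mmul (d a) (ident c) X"
        using Suc seg_Suc1[of d V a] by (simp add: V_def)
      also have "\<dots> = X" by (rule mmul_ident_left) (use cw[of a] Suc.prems False X in \<open>auto simp: c_def\<close>)
      finally show ?thesis .
    qed
  qed
  show ?thesis using segX[of "H+1"] Vp by auto
qed

lemma mmul_lin1: "mmul p A (mmul q (madd X D) B) = madd (mmul p A (mmul q X B)) (mmul p A (mmul q D B))"
  using mmul_lin[of p A q X 1 D B] by (simp add: madd_def)

lemma preimage:
  assumes W: "W \<in> params d H" and j: "j \<in> {1..H+1}"
    and frr: "full_row_rank (d (H+1)) (d j) (seg d W (j+1) (H+1-j))"
    and fcr: "full_col_rank (d (j - 1)) (d 0) (seg d W 1 (j - 1))" and \<epsilon>: "\<epsilon> > 0"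
  shows "\<exists>\<epsilon>'>0. \<forall>X\<in>mats (d (H+1)) (d 0). frob_norm (d (H+1)) (d 0) (msub X (seg d W 1 (H+1))) < \<epsilon>' \<longrightarrow>
     (\<exists>V\<in>params d H. pnorm d H V W < \<epsilon> \<and> seg d V 1 (H+1) = X)"
proof -
  let ?dy = "d (H+1)" and ?dx = "d 0"
  define F where "F = seg d W (j+1) (H+1-j)"
  define B where "B = seg d W 1 (j - 1)"
  note L = params_lay[OF W]
  have j1: "1 \<le> j" "j \<le> H + 1" using j by auto
  have Fm: "F \<in> mats ?dy (d j)" using seg_mats[OF L, of "j+1" "H+1-j"] j1 by (simp add: F_def)
  have Bm: "B \<in> mats (d (j - 1)) ?dx" using seg_mats[OF L, of 1 "j - 1"] by (simp add: B_def)
  obtain Y where Y: "Y \<in> mats (d j) ?dy" "mmul (d j) F Y = ident ?dy"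
    using right_inverse[OF frr[folded F_def] Fm] by blast
  obtain Z where Z: "Z \<in> mats ?dx (d (j - 1))" "mmul (d (j - 1)) Z B = ident ?dx"
    using left_inverse[OF fcr[folded B_def] Bm] by blast
  define cY where "cY = frob_norm (d j) ?dy Y"
  define cZ where "cZ = frob_norm ?dx (d (j - 1)) Z"
  have c0: "cY \<ge> 0" "cZ \<ge> 0" by (simp_all add: cY_def cZ_def)
  show ?thesis
  proof (intro exI[of _ "\<epsilon> / (cY * cZ + 1)"] conjI ballI impI)
    show "\<epsilon> / (cY * cZ + 1) > 0" using \<epsilon> c0 by (simp add: add_nonneg_pos)
    fix X assume X: "X \<in> mats ?dy ?dx" and Xn: "frob_norm ?dy ?dx (msub X (seg d W 1 (H+1))) < \<epsilon> / (cY * cZ + 1)"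
    define E where "E = msub X (seg d W 1 (H+1))"
    have Pm: "seg d W 1 (H+1) \<in> mats ?dy ?dx" using seg_mats[OF L, of 1 "H+1"] by simp
    have Em: "E \<in> mats ?dy ?dx" using X Pm by (auto simp: mats_def E_def msub_def)
    define \<Delta> where "\<Delta> = mmul ?dx (mmul ?dy Y E) Z"
    have \<Delta>m: "\<Delta> \<in> mats (d j) (d (j - 1))" unfolding \<Delta>_def
      by (rule mmul_mats[OF mmul_mats[OF Y(1) Em] Z(1)])
    define Xj where "Xj = madd (W j) \<Delta>"
    have Xjm: "Xj \<in> mats (d j) (d (j - 1))" using L \<Delta>m unfolding lay_def by (auto simp: mats_def Xj_def madd_def)
    define V where "V = W(j := Xj)"
    have V: "V \<in> params d H" unfolding V_def by (rule params_upd[OF W j Xjm])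
    have LV: "lay d V" by (rule params_lay[OF V])
    have FBD: "mmul (d j) F (mmul (d (j - 1)) \<Delta> B) = E"
    proof -
      have YEm: "mmul ?dy Y E \<in> mats (d j) ?dx" by (rule mmul_mats[OF Y(1) Em])
      have "mmul (d j) F (mmul (d (j - 1)) \<Delta> B) = mmul (d j) F (mmul ?dx (mmul ?dy Y E) (mmul (d (j - 1)) Z B))"
        by (simp add: \<Delta>_def mmul_assoc)
      also have "\<dots> = mmul (d j) F (mmul ?dy Y E)"
        using Z(2) mmul_ident_right[OF order_refl YEm] by simp
      also have "\<dots> = mmul ?dy (mmul (d j) F Y) E" by (simp add: mmul_assoc)
      also have "\<dots> = E" using Y(2) mmul_ident_left[OF order_refl Em] by simp
      finally show ?thesis .
    qed
    have "seg d V 1 (H+1) = mmul (d j) (seg d V (j+1) (H+1-j)) (mmul (d (j - 1)) (V j) (seg d V 1 (j - 1)))"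
      by (rule layer_split[OF LV j1])
    also have "seg d V (j+1) (H+1-j) = F" unfolding V_def F_def by (rule seg_upd_hi) simp
    also have "seg d V 1 (j - 1) = B" unfolding V_def B_def by (rule seg_upd_lo)
    also have "V j = madd (W j) \<Delta>" by (simp add: V_def Xj_def)
    also have "mmul (d j) F (mmul (d (j - 1)) (madd (W j) \<Delta>) B) = madd (seg d W 1 (H+1)) E"
      unfolding mmul_lin1 FBD using layer_split[OF L j1] by (simp add: F_def B_def)
    also have "\<dots> = X" by (simp add: madd_def E_def msub_def)
    finally have PV: "seg d V 1 (H+1) = X" .
    have "pnorm d H V W = frob_norm (d j) (d (j - 1)) (msub Xj (W j))"
      unfolding V_def by (rule pnorm_upd[OF j])
    also have "msub Xj (W j) = \<Delta>" by (simp add: Xj_def msub_def madd_def)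
    also have "frob_norm (d j) (d (j - 1)) \<Delta> \<le> frob_norm (d j) ?dx (mmul ?dy Y E) * cZ"
      unfolding \<Delta>_def cZ_def by (rule frob_mmul)
    also have "\<dots> \<le> (cY * frob_norm ?dy ?dx E) * cZ"
      unfolding cY_def using c0 by (intro mult_right_mono frob_mmul) simp
    also have "\<dots> < \<epsilon>"
    proof -
      let ?e = "frob_norm ?dy ?dx E"
      have e0: "?e \<ge> 0" by simp
      have "cY * ?e * cZ = (cY * cZ) * ?e" by simp
      also have "\<dots> \<le> (cY * cZ + 1) * ?e" using e0 by (simp add: algebra_simps)
      also have "\<dots> < (cY * cZ + 1) * (\<epsilon> / (cY * cZ + 1))"
        using Xn c0 by (intro mult_strict_left_mono) (simp_all add: E_def add_nonneg_pos)
      also have "\<dots> = \<epsilon>"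
      proof -
        have "0 \<le> cY * cZ" using c0 by simp
        then have "cY * cZ + 1 \<noteq> 0" by linarith
        then show ?thesis by simp
      qed
      finally show ?thesis .
    qed
    finally show "\<exists>V\<in>params d H. pnorm d H V W < \<epsilon> \<and> seg d V 1 (H+1) = X" using V PV by blast
  qed
qed

theorem theorem3:
  fixes H dx dy :: nat and d :: "nat \<Rightarrow> nat" and l0 :: "mat \<Rightarrow> real"
    and What :: "nat \<Rightarrow> mat"
  assumes "H \<ge> 1" and "d 0 = dx" and "d (H + 1) = dy"
    and "\<forall>j\<in>{1..H}. d j \<ge> min dx dy"
    and "mat_differentiable dy dx l0"
    and "What \<in> params d H"
    and "p_critical d H (\<lambda>W. l0 (seg d W 1 (H + 1))) What"
  shows
   "(mat_grad dy dx l0 (seg d What 1 (H + 1)) \<noteq> zmat \<longrightarrow>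
       p_saddle d H (\<lambda>W. l0 (seg d W 1 (H + 1))) What)
  \<and> (mat_grad dy dx l0 (seg d What 1 (H + 1)) = zmat \<longrightarrow>
       (mat_local_min dy dx l0 (seg d What 1 (H + 1)) \<longrightarrow>
          p_local_min d H (\<lambda>W. l0 (seg d W 1 (H + 1))) What)
     \<and> (mat_local_max dy dx l0 (seg d What 1 (H + 1)) \<longrightarrow>
          p_local_max d H (\<lambda>W. l0 (seg d W 1 (H + 1))) What)
     \<and> (p_global_min d H (\<lambda>W. l0 (seg d W 1 (H + 1))) What \<longleftrightarrow>
          mat_global_min dy dx l0 (seg d What 1 (H + 1)))
     \<and> (p_global_max d H (\<lambda>W. l0 (seg d W 1 (H + 1))) What \<longleftrightarrow>
          mat_global_max dy dx l0 (seg d What 1 (H + 1))))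
  \<and> ((\<exists>j\<in>{1..H+1}. full_row_rank dy (d j) (seg d What (j + 1) (H + 1 - j))
                   \<and> full_col_rank (d (j - 1)) dx (seg d What 1 (j - 1))) \<longrightarrow>
       mat_grad dy dx l0 (seg d What 1 (H + 1)) = zmat
     \<and> (p_local_min d H (\<lambda>W. l0 (seg d W 1 (H + 1))) What \<longrightarrow>
          mat_local_min dy dx l0 (seg d What 1 (H + 1)))
     \<and> (p_local_max d H (\<lambda>W. l0 (seg d W 1 (H + 1))) What \<longrightarrow>
          mat_local_max dy dx l0 (seg d What 1 (H + 1))))"
proof -
  have dx: "dx = d 0" and dy: "dy = d (H + 1)" using assms(2,3) by simp_all
  note W = assms(6) and crit = assms(7)
  note L = params_lay[OF W]
  have wid: "\<forall>j\<in>{1..H}. min (d 0) (d (H+1)) \<le> d j" using assms(4) dx dy by simp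
  define P where "P = seg d What 1 (H + 1)"
  define R where "R = mat_grad (d (H + 1)) (d 0) l0 P"
  have Pm: "P \<in> mats (d (H + 1)) (d 0)" using seg_mats[OF L, of 1 "H+1"] by (simp add: P_def)
  have "\<exists>G. mat_has_grad (d (H + 1)) (d 0) l0 G P"
    using assms(5) Pm dx dy unfolding mat_differentiable_def by simp
  then have grad: "mat_has_grad (d (H + 1)) (d 0) l0 R P"
    unfolding R_def mat_grad_def by (rule someI_ex)
  have Rm: "R \<in> mats (d (H + 1)) (d 0)" using grad by (simp add: mat_has_grad_def)
  have Vm: "seg d V 1 (H + 1) \<in> mats (d (H + 1)) (d 0)" if "V \<in> params d H" for V
    using seg_mats[OF params_lay[OF that], of 1 "H+1"] by simp
  have ext_zero: "R = zmat" if s: "s = 1 \<or> s = -1" and \<epsilon>: "\<epsilon> > 0"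
    and ext: "\<forall>V\<in>params d H. pnorm d H V What < \<epsilon> \<longrightarrow> s * l0 (seg d What 1 (H + 1)) \<le> s * l0 (seg d V 1 (H + 1))" for s \<epsilon>
  proof -
    have "FC d H What R (\<epsilon> / 2)"
      by (rule fc_from_ext[OF W s \<epsilon> ext]) (use grad in \<open>simp add: P_def\<close>)
    moreover have "\<epsilon> / 2 > 0" using \<epsilon> by simp
    ultimately have "\<forall>a<d (H+1). \<forall>b<d 0. R a b = 0"
      using claim_all[OF W wid] by blast
    then show ?thesis by (rule zmat_eq[OF Rm])
  qed
  have part1: "R \<noteq> zmat \<longrightarrow> p_saddle d H (\<lambda>W. l0 (seg d W 1 (H + 1))) What"
  proof
    assume Rz: "R \<noteq> zmat"
    have nmin: "\<not> p_local_min d H (\<lambda>W. l0 (seg d W 1 (H + 1))) What"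
    proof
      assume "p_local_min d H (\<lambda>W. l0 (seg d W 1 (H + 1))) What"
      then obtain \<epsilon> where \<epsilon>: "\<epsilon> > 0" "\<forall>V\<in>params d H. pnorm d H V What < \<epsilon> \<longrightarrow> l0 (seg d What 1 (H + 1)) \<le> l0 (seg d V 1 (H + 1))"
        unfolding p_local_min_def by blast
      have "R = zmat" by (rule ext_zero[of 1 \<epsilon>]) (use \<epsilon> in simp_all)
      then show False using Rz by simp
    qed
    have nmax: "\<not> p_local_max d H (\<lambda>W. l0 (seg d W 1 (H + 1))) What"
    proof
      assume "p_local_max d H (\<lambda>W. l0 (seg d W 1 (H + 1))) What"
      then obtain \<epsilon> where \<epsilon>: "\<epsilon> > 0" "\<forall>V\<in>params d H. pnorm d H V What < \<epsilon> \<longrightarrow> l0 (seg d V 1 (H + 1)) \<le> l0 (seg d What 1 (H + 1))"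
        unfolding p_local_max_def by blast
      have "R = zmat" by (rule ext_zero[of "-1" \<epsilon>]) (use \<epsilon> in simp_all)
      then show False using Rz by simp
    qed
    show "p_saddle d H (\<lambda>W. l0 (seg d W 1 (H + 1))) What"
      unfolding p_saddle_def using crit nmin nmax by simp
  qed
  have p2a: "mat_local_min (d (H+1)) (d 0) l0 P \<longrightarrow> p_local_min d H (\<lambda>W. l0 (seg d W 1 (H + 1))) What"
  proof
    assume "mat_local_min (d (H+1)) (d 0) l0 P"
    then obtain \<epsilon> where \<epsilon>: "\<epsilon> > 0" "\<forall>X\<in>mats (d (H+1)) (d 0). frob_norm (d (H+1)) (d 0) (msub X P) < \<epsilon> \<longrightarrow> l0 P \<le> l0 X"
      unfolding mat_local_min_def by blast
    obtain \<delta> where \<delta>: "\<delta> > 0" "\<forall>V\<in>params d H. pnorm d H V What < \<delta> \<longrightarrow>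
       frob_norm (d (H+1)) (d 0) (msub (seg d V 1 (H+1)) (seg d What 1 (H+1))) < \<epsilon>"
      using seg_cont[OF W \<epsilon>(1)] by blast
    show "p_local_min d H (\<lambda>W. l0 (seg d W 1 (H + 1))) What"
      unfolding p_local_min_def using \<delta> \<epsilon>(2) Vm by (auto simp: P_def)
  qed
  have p2a': "mat_local_max (d (H+1)) (d 0) l0 P \<longrightarrow> p_local_max d H (\<lambda>W. l0 (seg d W 1 (H + 1))) What"
  proof
    assume "mat_local_max (d (H+1)) (d 0) l0 P"
    then obtain \<epsilon> where \<epsilon>: "\<epsilon> > 0" "\<forall>X\<in>mats (d (H+1)) (d 0). frob_norm (d (H+1)) (d 0) (msub X P) < \<epsilon> \<longrightarrow> l0 X \<le> l0 P"
      unfolding mat_local_max_def by blast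
    obtain \<delta> where \<delta>: "\<delta> > 0" "\<forall>V\<in>params d H. pnorm d H V What < \<delta> \<longrightarrow>
       frob_norm (d (H+1)) (d 0) (msub (seg d V 1 (H+1)) (seg d What 1 (H+1))) < \<epsilon>"
      using seg_cont[OF W \<epsilon>(1)] by blast
    show "p_local_max d H (\<lambda>W. l0 (seg d W 1 (H + 1))) What"
      unfolding p_local_max_def using \<delta> \<epsilon>(2) Vm by (auto simp: P_def)
  qed
  have surj: "\<exists>V\<in>params d H. seg d V 1 (H+1) = X" if "X \<in> mats (d (H+1)) (d 0)" for X
    by (rule surj_prod[OF assms(1) wid that])
  have p2b: "p_global_min d H (\<lambda>W. l0 (seg d W 1 (H + 1))) What \<longleftrightarrow> mat_global_min (d (H+1)) (d 0) l0 P"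
  proof
    assume g: "p_global_min d H (\<lambda>W. l0 (seg d W 1 (H + 1))) What"
    show "mat_global_min (d (H+1)) (d 0) l0 P"
      unfolding mat_global_min_def
    proof
      fix X assume "X \<in> mats (d (H+1)) (d 0)"
      then obtain V where "V \<in> params d H" "seg d V 1 (H+1) = X" using surj by blast
      then show "l0 P \<le> l0 X" using g unfolding p_global_min_def P_def by force
    qed
  next
    assume "mat_global_min (d (H+1)) (d 0) l0 P"
    then show "p_global_min d H (\<lambda>W. l0 (seg d W 1 (H + 1))) What"
      unfolding p_global_min_def mat_global_min_def P_def using Vm by simp
  qed
  have p2b': "p_global_max d H (\<lambda>W. l0 (seg d W 1 (H + 1))) What \<longleftrightarrow> mat_global_max (d (H+1)) (d 0) l0 P"
  proof
    assume g: "p_global_max d H (\<lambda>W. l0 (seg d W 1 (H + 1))) What"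
    show "mat_global_max (d (H+1)) (d 0) l0 P"
      unfolding mat_global_max_def
    proof
      fix X assume "X \<in> mats (d (H+1)) (d 0)"
      then obtain V where "V \<in> params d H" "seg d V 1 (H+1) = X" using surj by blast
      then show "l0 X \<le> l0 P" using g unfolding p_global_max_def P_def by force
    qed
  next
    assume "mat_global_max (d (H+1)) (d 0) l0 P"
    then show "p_global_max d H (\<lambda>W. l0 (seg d W 1 (H + 1))) What"
      unfolding p_global_max_def mat_global_max_def P_def using Vm by simp
  qed
  have part3: "(\<exists>j\<in>{1..H+1}. full_row_rank (d (H+1)) (d j) (seg d What (j + 1) (H + 1 - j))
                   \<and> full_col_rank (d (j - 1)) (d 0) (seg d What 1 (j - 1))) \<longrightarrow>
       R = zmat
     \<and> (p_local_min d H (\<lambda>W. l0 (seg d W 1 (H + 1))) What \<longrightarrow> mat_local_min (d (H+1)) (d 0) l0 P)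
     \<and> (p_local_max d H (\<lambda>W. l0 (seg d W 1 (H + 1))) What \<longrightarrow> mat_local_max (d (H+1)) (d 0) l0 P)"
  proof
    assume "\<exists>j\<in>{1..H+1}. full_row_rank (d (H+1)) (d j) (seg d What (j + 1) (H + 1 - j))
                   \<and> full_col_rank (d (j - 1)) (d 0) (seg d What 1 (j - 1))"
    then obtain j where j: "j \<in> {1..H+1}" and frr: "full_row_rank (d (H+1)) (d j) (seg d What (j + 1) (H + 1 - j))"
      and fcr: "full_col_rank (d (j - 1)) (d 0) (seg d What 1 (j - 1))" by blast
    have cg: "frob_inner (d (H + 1)) (d 0) R (Kmat d H What j p q) = 0" if "p < d j" "q < d (j - 1)" for p q
      by (rule crit_grad[OF W crit _ j that]) (use grad in \<open>simp add: P_def\<close>)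
    have rows: "(\<Sum>b<d 0. R a b * seg d What 1 (j - 1) q b) = 0" if q: "q < d (j - 1)" and a: "a < d (H+1)" for q a
    proof -
      have "\<forall>p<d j. (\<Sum>a<d (H+1). (\<Sum>b<d 0. R a b * seg d What 1 (j - 1) q b) * seg d What (j + 1) (H + 1 - j) a p) = 0"
        using cg q by (simp only: Kmat_rows) blast
      then show ?thesis
        using frr[unfolded full_row_rank_def, rule_format, of "\<lambda>a. \<Sum>b<d 0. R a b * seg d What 1 (j - 1) q b"] a
        by blast
    qed
    have Rz: "\<forall>a<d (H+1). \<forall>b<d 0. R a b = 0"
    proof (intro allI impI)
      fix a b assume a: "a < d (H+1)" and b: "b < d 0"
      have "\<forall>q<d (j - 1). (\<Sum>b<d 0. seg d What 1 (j - 1) q b * R a b) = 0"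
        using rows a by (simp add: mult.commute)
      then show "R a b = 0"
        using fcr[unfolded full_col_rank_def, rule_format, of "\<lambda>b. R a b"] b by blast
    qed
    have pre: "\<And>\<epsilon>. \<epsilon> > 0 \<Longrightarrow> \<exists>\<epsilon>'>0. \<forall>X\<in>mats (d (H+1)) (d 0). frob_norm (d (H+1)) (d 0) (msub X P) < \<epsilon>' \<longrightarrow>
     (\<exists>V\<in>params d H. pnorm d H V What < \<epsilon> \<and> seg d V 1 (H+1) = X)"
      using preimage[OF W j frr fcr] by (simp add: P_def)
    have m1: "p_local_min d H (\<lambda>W. l0 (seg d W 1 (H + 1))) What \<longrightarrow> mat_local_min (d (H+1)) (d 0) l0 P"
    proof
      assume "p_local_min d H (\<lambda>W. l0 (seg d W 1 (H + 1))) What"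
      then obtain \<epsilon> where \<epsilon>: "\<epsilon> > 0" "\<forall>V\<in>params d H. pnorm d H V What < \<epsilon> \<longrightarrow> l0 P \<le> l0 (seg d V 1 (H + 1))"
        unfolding p_local_min_def P_def by blast
      obtain \<epsilon>' where \<epsilon>': "\<epsilon>' > 0" "\<forall>X\<in>mats (d (H+1)) (d 0). frob_norm (d (H+1)) (d 0) (msub X P) < \<epsilon>' \<longrightarrow>
         (\<exists>V\<in>params d H. pnorm d H V What < \<epsilon> \<and> seg d V 1 (H+1) = X)" using pre[OF \<epsilon>(1)] by blast
      show "mat_local_min (d (H+1)) (d 0) l0 P"
        unfolding mat_local_min_def
      proof (intro exI[of _ \<epsilon>'] conjI ballI impI)
        show "\<epsilon>' > 0" by fact
        fix X assume "X \<in> mats (d (H+1)) (d 0)" "frob_norm (d (H+1)) (d 0) (msub X P) < \<epsilon>'"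
        then obtain V where "V \<in> params d H" "pnorm d H V What < \<epsilon>" "seg d V 1 (H+1) = X" using \<epsilon>'(2) by blast
        then show "l0 P \<le> l0 X" using \<epsilon>(2) by force
      qed
    qed
    have m2: "p_local_max d H (\<lambda>W. l0 (seg d W 1 (H + 1))) What \<longrightarrow> mat_local_max (d (H+1)) (d 0) l0 P"
    proof
      assume "p_local_max d H (\<lambda>W. l0 (seg d W 1 (H + 1))) What"
      then obtain \<epsilon> where \<epsilon>: "\<epsilon> > 0" "\<forall>V\<in>params d H. pnorm d H V What < \<epsilon> \<longrightarrow> l0 (seg d V 1 (H + 1)) \<le> l0 P"
        unfolding p_local_max_def P_def by blast
      obtain \<epsilon>' where \<epsilon>': "\<epsilon>' > 0" "\<forall>X\<in>mats (d (H+1)) (d 0). frob_norm (d (H+1)) (d 0) (msub X P) < \<epsilon>' \<longrightarrow>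
         (\<exists>V\<in>params d H. pnorm d H V What < \<epsilon> \<and> seg d V 1 (H+1) = X)" using pre[OF \<epsilon>(1)] by blast
      show "mat_local_max (d (H+1)) (d 0) l0 P"
        unfolding mat_local_max_def
      proof (intro exI[of _ \<epsilon>'] conjI ballI impI)
        show "\<epsilon>' > 0" by fact
        fix X assume "X \<in> mats (d (H+1)) (d 0)" "frob_norm (d (H+1)) (d 0) (msub X P) < \<epsilon>'"
        then obtain V where "V \<in> params d H" "pnorm d H V What < \<epsilon>" "seg d V 1 (H+1) = X" using \<epsilon>'(2) by blast
        then show "l0 X \<le> l0 P" using \<epsilon>(2) by force
      qed
    qed
    show "R = zmat \<and> (p_local_min d H (\<lambda>W. l0 (seg d W 1 (H + 1))) What \<longrightarrow> mat_local_min (d (H+1)) (d 0) l0 P)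
     \<and> (p_local_max d H (\<lambda>W. l0 (seg d W 1 (H + 1))) What \<longrightarrow> mat_local_max (d (H+1)) (d 0) l0 P)"
      using zmat_eq[OF Rm Rz] m1 m2 by blast
  qed
  show ?thesis
    unfolding dx dy R_def[symmetric] P_def[symmetric]
    using part1 p2a p2a' p2b p2b' part3 by blast
qed

end
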